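(* Let $b\in(0,1)$, $I=(0,1)$. Let $\varphi(x)=x/b$ on $[0,b]$, $\varphi(x)=(1-x)/(1-b)$ on $[b,1]$, and for $s\in(\tfrac12,1)$ let $\varphi^s(x)=x^s/b^s$ on $[0,b]$, $\varphi^s(x)=(1-x)^s/(1-b)^s$ on $[b,1]$, both extended by $0$ outside $I$. Then there exist $s_0\in(\tfrac12,1)$ and $C>0$ such that for all $s\in(s_0,1)$: (i) $\|\varphi^s-\varphi\|_{\widetilde H^s(I)}\le C(1-s)$; (ii) $\|\varphi^s-\varphi\|_{H^1(I)}\le C(1-s)$.
   Context: For $s\in(0,1)$, $C(s)=\dfrac{2^{2s}s\,\Gamma(s+\frac12)}{\sqrt\pi\,\Gamma(1-s)}$ and $\|w\|^2_{\widetilde H^s(I)}=\frac{C(s)}2\iint_{\mathbb R^2}\frac{|\widetilde w(x)-\widetilde w(y)|^2}{|x-y|^{1+2s}}\,\mathrm dy\,\mathrm dx$, where $\widetilde w$ is the extension of $w$ by zero outside $I$. *)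

theory Defs
  imports "HOL-Analysis.Analysis"
begin

definition I01 :: "real set" where "I01 = {0<..<1}"

definition Cs :: "real \<Rightarrow> real" where
  "Cs s = (2::real) powr (2 * s) * s * Gamma (s + 1/2) / (sqrt (pi::real) * Gamma (1 - s))"

text \<open>Squared \<open>\<widetilde>H^s(I)\<close> norm of w, where w :: real => real is already the
  zero extension (values outside I are zero). Nonnegative (ennreal) iterated integral.\<close>
definition Hs_tilde_norm_sq :: "real \<Rightarrow> (real \<Rightarrow> real) \<Rightarrow> ennreal" where
  "Hs_tilde_norm_sq s w =
     ennreal (Cs s / 2) *
     (\<integral>\<^sup>+ x. (\<integral>\<^sup>+ y. ennreal ((w x - w y)^2 / (\<bar>x - y\<bar> powr (1 + 2 * s))) \<partial>lborel) \<partial>lborel)"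

definition smooth_fun :: "(real \<Rightarrow> real) \<Rightarrow> bool" where
  "smooth_fun \<psi> \<longleftrightarrow> (\<forall>n x. ((deriv ^^ n) \<psi>) differentiable (at x))"

definition test_fun :: "(real \<Rightarrow> real) \<Rightarrow> bool" where
  "test_fun \<psi> \<longleftrightarrow> smooth_fun \<psi> \<and>
     (\<exists>a c. 0 < a \<and> c < 1 \<and> (\<forall>x. x \<notin> {a..c} \<longrightarrow> \<psi> x = 0))"

definition weak_deriv :: "(real \<Rightarrow> real) \<Rightarrow> (real \<Rightarrow> real) \<Rightarrow> bool" where
  "weak_deriv w g \<longleftrightarrow>
     (\<forall>\<psi>. test_fun \<psi> \<longrightarrow>
        set_integrable lborel I01 (\<lambda>x. w x * deriv \<psi> x) \<and>
        set_integrable lborel I01 (\<lambda>x. g x * \<psi> x) \<and>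
        (LINT x:I01|lborel. w x * deriv \<psi> x) = - (LINT x:I01|lborel. g x * \<psi> x))"

definition L2_I :: "(real \<Rightarrow> real) \<Rightarrow> bool" where
  "L2_I w \<longleftrightarrow> w \<in> borel_measurable lborel \<and> set_integrable lborel I01 (\<lambda>x. (w x)^2)"

definition in_H1 :: "(real \<Rightarrow> real) \<Rightarrow> bool" where
  "in_H1 w \<longleftrightarrow> L2_I w \<and> (\<exists>g. L2_I g \<and> weak_deriv w g)"

definition H1_norm :: "(real \<Rightarrow> real) \<Rightarrow> real" where
  "H1_norm w = sqrt ((LINT x:I01|lborel. (w x)^2) +
      (LINT x:I01|lborel. ((SOME g. L2_I g \<and> weak_deriv w g) x)^2))"

definition phi :: "real \<Rightarrow> real \<Rightarrow> real" where
  "phi b x = (if 0 \<le> x \<and> x \<le> b then x / b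
              else if b < x \<and> x \<le> 1 then (1 - x) / (1 - b) else 0)"

definition phi_s :: "real \<Rightarrow> real \<Rightarrow> real \<Rightarrow> real" where
  "phi_s s b x = (if 0 \<le> x \<and> x \<le> b then x powr s / b powr s
              else if b < x \<and> x \<le> 1 then (1 - x) powr s / (1 - b) powr s else 0)"

end

theory Submission
  imports Defs "HOL-Computational_Algebra.Polynomial"
begin

fun Cn :: "nat \<Rightarrow> (real \<Rightarrow> real) \<Rightarrow> bool" where
  "Cn 0 f = (\<forall>x. f differentiable (at x))"
| "Cn (Suc n) f = ((\<forall>x. f differentiable (at x)) \<and> Cn n (deriv f))"

lemma Cn_iff: "Cn n f \<longleftrightarrow> (\<forall>k\<le>n. \<forall>x. (deriv ^^ k) f differentiable (at x))"
proof (induction n arbitrary: f)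
  case 0
  then show ?case by simp
next
  case (Suc n)
  have "(\<forall>k\<le>Suc n. \<forall>x. (deriv ^^ k) f differentiable (at x)) \<longleftrightarrow>
        (\<forall>x. f differentiable (at x)) \<and> (\<forall>k\<le>n. \<forall>x. (deriv ^^ Suc k) f differentiable (at x))"
    by (metis (no_types, lifting) Suc_le_mono funpow_0 not0_implies_Suc zero_le)
  also have "\<dots> \<longleftrightarrow> (\<forall>x. f differentiable (at x)) \<and> (\<forall>k\<le>n. \<forall>x. (deriv ^^ k) (deriv f) differentiable (at x))"
    by (simp add: funpow_Suc_right del: funpow.simps)
  finally show ?case using Suc by simp
qed

lemma smooth_fun_Cn: "smooth_fun f \<longleftrightarrow> (\<forall>n. Cn n f)"
  unfolding smooth_fun_def Cn_iff by blast

lemma Cn_diff: "Cn n f \<Longrightarrow> f differentiable (at x)"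
  by (cases n) auto

lemma Cn_mono: "Cn (Suc n) f \<Longrightarrow> Cn n f"
proof (induction n arbitrary: f)
  case 0
  then show ?case by simp
next
  case (Suc n)
  then show ?case by simp
qed

lemma deriv_fun_eq:
  assumes "\<And>x. (f has_real_derivative f' x) (at x)"
  shows "deriv f = f'"
  using assms DERIV_imp_deriv by blast

lemma real_diff_DERIV: "f differentiable (at x) \<Longrightarrow> (f has_real_derivative deriv f x) (at x)"
  using DERIV_deriv_iff_real_differentiable by blast

lemma Cn_add: "Cn n f \<Longrightarrow> Cn n g \<Longrightarrow> Cn n (\<lambda>x. f x + g x)"
proof (induction n arbitrary: f g)
  case 0
  then show ?case by auto
next
  case (Suc n)
  have "deriv (\<lambda>x. f x + g x) = (\<lambda>x. deriv f x + deriv g x)"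
    by (rule deriv_fun_eq) (use Suc.prems in \<open>auto intro!: derivative_eq_intros real_diff_DERIV\<close>)
  then show ?case using Suc by auto
qed

lemma Cn_const: "Cn n (\<lambda>x. c)"
proof (induction n arbitrary: c)
  case 0
  then show ?case by auto
next
  case (Suc n)
  have "deriv (\<lambda>x::real. c) = (\<lambda>x. 0)"
    by (rule deriv_fun_eq) auto
  then show ?case using Suc by auto
qed

lemma Cn_mult: "Cn n f \<Longrightarrow> Cn n g \<Longrightarrow> Cn n (\<lambda>x. f x * g x)"
proof (induction n arbitrary: f g)
  case 0
  then show ?case by auto
next
  case (Suc n)
  have "deriv (\<lambda>x. f x * g x) = (\<lambda>x. deriv f x * g x + f x * deriv g x)"
    by (rule deriv_fun_eq) (use Suc.prems in \<open>auto intro!: derivative_eq_intros real_diff_DERIV\<close>)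
  moreover have "Cn n (\<lambda>x. deriv f x * g x)"
    using Suc.IH[of "deriv f" g] Suc.prems Cn_mono[OF Suc.prems(2)] by auto
  moreover have "Cn n (\<lambda>x. f x * deriv g x)"
    using Suc.IH[of f "deriv g"] Suc.prems Cn_mono[OF Suc.prems(1)] by auto
  ultimately show ?case using Suc by (auto intro: Cn_add)
qed

lemma Cn_id: "Cn n (\<lambda>x. x)"
proof (cases n)
  case 0
  then show ?thesis by auto
next
  case (Suc m)
  have "deriv (\<lambda>x::real. x) = (\<lambda>x. 1)"
    by (rule deriv_fun_eq) auto
  then show ?thesis using Suc by (auto intro: Cn_const)
qed

lemma Cn_comp: "Cn n f \<Longrightarrow> Cn n q \<Longrightarrow> Cn n (\<lambda>x. f (q x))"
proof (induction n arbitrary: f q)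
  case 0
  then show ?case by (auto intro: differentiable_chain_at[unfolded o_def])
next
  case (Suc n)
  have "deriv (\<lambda>x. f (q x)) = (\<lambda>x. deriv f (q x) * deriv q x)"
    by (rule deriv_fun_eq) (use Suc.prems in \<open>auto intro!: DERIV_chain2[of f] real_diff_DERIV\<close>)
  moreover have "Cn n (\<lambda>x. deriv f (q x))"
    using Suc.IH[of "deriv f" q] Suc.prems Cn_mono[OF Suc.prems(2)] by auto
  moreover have "\<And>x. (\<lambda>x. f (q x)) differentiable (at x)"
    using Suc.prems by (auto intro: differentiable_chain_at[unfolded o_def])
  ultimately show ?case using Suc by (auto intro: Cn_mult)
qed

definition Fp :: "real poly \<Rightarrow> real \<Rightarrow> real" where
  "Fp p t = (if t > 0 then poly p (1/t) * exp (-1/t) else 0)"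

definition Dp :: "real poly \<Rightarrow> real poly" where
  "Dp p = [:0,0,1:] * (p - pderiv p)"

lemma poly_exp_lim: "((\<lambda>z. poly q z / exp z) \<longlongrightarrow> 0) at_top" for q :: "real poly"
proof -
  have "((\<lambda>z. \<Sum>i\<le>degree q. coeff q i * (z ^ i / exp z)) \<longlongrightarrow> (\<Sum>i\<le>degree q. coeff q i * 0)) at_top"
    by (intro tendsto_sum tendsto_mult tendsto_const) (simp add: tendsto_power_div_exp_0)
  then show ?thesis
    by (simp add: poly_altdef sum_divide_distrib)
qed

lemma Fp_deriv0: "(Fp p has_real_derivative 0) (at 0)"
proof -
  have L: "((\<lambda>y. (Fp p y - Fp p 0) / (y - 0)) \<longlongrightarrow> 0) (at_left 0)"
  proof (rule tendsto_eventually)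
    have "\<forall>\<^sub>F y in at_left (0::real). y < 0" by (simp add: eventually_at_filter)
    then show "\<forall>\<^sub>F y in at_left 0. (Fp p y - Fp p 0) / (y - 0) = 0"
      by eventually_elim (auto simp: Fp_def)
  qed
  have R0: "((\<lambda>y. poly (pCons 0 p) (inverse y) / exp (inverse y)) \<longlongrightarrow> 0) (at_right 0)"
    by (rule filterlim_compose[OF poly_exp_lim filterlim_inverse_at_top_right])
  have R: "((\<lambda>y. (Fp p y - Fp p 0) / (y - 0)) \<longlongrightarrow> 0) (at_right 0)"
  proof (rule Lim_transform_eventually[OF R0])
    show "\<forall>\<^sub>F y in at_right 0. poly (pCons 0 p) (inverse y) / exp (inverse y) = (Fp p y - Fp p 0) / (y - 0)"
      unfolding eventually_at_right_field
      by (auto simp: Fp_def exp_minus field_simps intro!: exI[of _ 1])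
  qed
  show ?thesis
    unfolding has_field_derivative_iff using L R filterlim_at_split by blast
qed

lemma Fp_deriv: "(Fp p has_real_derivative Fp (Dp p) t) (at t)"
proof -
  consider "t < 0" | "t = 0" | "t > 0" by linarith
  then show ?thesis
  proof cases
    case 1
    have "((\<lambda>_. 0) has_real_derivative Fp (Dp p) t) (at t)" using 1 by (simp add: Fp_def)
    then show ?thesis
      by (rule has_field_derivative_transform_within_open[where S="{..<0}"])
         (use 1 in \<open>auto simp: Fp_def\<close>)
  next
    case 2
    then show ?thesis using Fp_deriv0 by (simp add: Fp_def)
  next
    case 3
    have "((\<lambda>t. poly p (1/t) * exp (-1/t)) has_real_derivative
          poly (pderiv p) (1/t) * (- 1 / t^2) * exp (-1/t) + poly p (1/t) * (exp (-1/t) * (1 / t^2))) (at t)"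
      using 3 by (auto intro!: derivative_eq_intros DERIV_chain2[OF poly_DERIV] simp: power2_eq_square)
    moreover have "poly (pderiv p) (1/t) * (- 1 / t^2) * exp (-1/t) + poly p (1/t) * (exp (-1/t) * (1 / t^2))
        = Fp (Dp p) t"
      using 3 by (simp add: Fp_def Dp_def algebra_simps power2_eq_square)
    ultimately have "((\<lambda>t. poly p (1/t) * exp (-1/t)) has_real_derivative Fp (Dp p) t) (at t)" by simp
    then show ?thesis
      by (rule has_field_derivative_transform_within_open[where S="{0<..}"])
         (use 3 in \<open>auto simp: Fp_def\<close>)
  qed
qed

lemma deriv_Fp: "deriv (Fp p) = Fp (Dp p)"
  by (rule deriv_fun_eq) (rule Fp_deriv)

lemma Cn_Fp: "Cn n (Fp p)"
proof (induction n arbitrary: p)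
  case 0
  then show ?case using Fp_deriv real_differentiable_def by auto
next
  case (Suc n)
  then show ?case using Fp_deriv real_differentiable_def by (auto simp: deriv_Fp)
qed

definition Efun :: "real \<Rightarrow> real" where
  "Efun t = (if t > 0 then exp (-1/t) else 0)"

lemma Efun_Fp: "Efun = Fp 1"
  by (auto simp: Efun_def Fp_def)

lemma Cn_Efun: "Cn n Efun"
  unfolding Efun_Fp by (rule Cn_Fp)

definition bump :: "real \<Rightarrow> real \<Rightarrow> real \<Rightarrow> real \<Rightarrow> real" where
  "bump m a c x = Efun (m * ((x - a) * (c - x)))"

lemma smooth_bump: "smooth_fun (bump m a c)"
  unfolding smooth_fun_Cn bump_def
proof
  fix n
  have "Cn n (\<lambda>x. x - a)"
    using Cn_add[OF Cn_id Cn_const[of n "-a"]] by simp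
  moreover have "Cn n (\<lambda>x. c - x)"
    using Cn_add[OF Cn_const[of n c] Cn_mult[OF Cn_const[of n "-1"] Cn_id]] by simp
  ultimately have "Cn n (\<lambda>x. m * ((x - a) * (c - x)))"
    by (intro Cn_mult Cn_const)
  then show "Cn n (\<lambda>x. Efun (m * ((x - a) * (c - x))))"
    by (rule Cn_comp[OF Cn_Efun])
qed

lemma test_bump:
  assumes "0 < a" "a < c" "c < 1" "m > 0"
  shows "test_fun (bump m a c)"
proof -
  have "bump m a c x = 0" if "x \<notin> {a..c}" for x
  proof -
    from that have "(x - a) * (c - x) < 0"
      using assms by (auto simp: mult_less_0_iff)
    then have "m * ((x - a) * (c - x)) < 0"
      using assms mult_pos_neg by blast
    then show ?thesis
      by (auto simp: bump_def Efun_def)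
  qed
  then show ?thesis
    unfolding test_fun_def using smooth_bump assms by blast
qed

lemma bump_bounds: "0 \<le> bump m a c x" "bump m a c x \<le> 1"
  by (auto simp: bump_def Efun_def)

lemma I01_sets[measurable]: "I01 \<in> sets lborel"
  by (simp add: I01_def)

lemma abs_le_1_sq: "\<bar>t::real\<bar> \<le> 1 + t^2"
proof (cases "\<bar>t\<bar> \<le> 1")
  case True then show ?thesis by (simp add: add_increasing2)
next
  case False
  then have "\<bar>t\<bar> * 1 \<le> \<bar>t\<bar> * \<bar>t\<bar>" by (intro mult_left_mono) auto
  moreover have "\<bar>t\<bar> * \<bar>t\<bar> = t^2" by (simp add: power2_eq_square)
  ultimately show ?thesis by linarith
qed

lemma set_integrable_one_I01: "set_integrable lborel I01 (\<lambda>_. 1::real)"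
  unfolding set_integrable_def I01_def
  by (simp add: integrable_real_indicator)

lemma L2_set_integrable:
  assumes "L2_I g" shows "set_integrable lborel I01 g"
proof -
  have m[measurable]: "g \<in> borel_measurable lborel" using assms by (simp add: L2_I_def)
  have "set_integrable lborel I01 (\<lambda>x. 1 + (g x)^2)"
    using assms set_integrable_one_I01 unfolding L2_I_def by (intro set_integral_add(1)) auto
  then show ?thesis
    by (rule set_integrable_bound) (auto simp: abs_le_1_sq set_borel_measurable_def)
qed

lemma test_fun_diff:
  assumes "test_fun \<psi>"
  shows "\<psi> differentiable (at x)" "deriv \<psi> differentiable (at x)"
proof -
  have "smooth_fun \<psi>" using assms by (simp add: test_fun_def)
  then have "Cn 1 \<psi>" by (simp add: smooth_fun_Cn)
  then show "\<psi> differentiable (at x)" "deriv \<psi> differentiable (at x)"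
    by (auto intro: Cn_diff)
qed

lemma test_fun_meas:
  assumes "test_fun \<psi>"
  shows "\<psi> \<in> borel_measurable lborel" "deriv \<psi> \<in> borel_measurable lborel"
proof -
  have "continuous_on UNIV \<psi>"
    using test_fun_diff(1)[OF assms] by (meson continuous_at_imp_continuous_on differentiable_imp_continuous_within)
  then show "\<psi> \<in> borel_measurable lborel"
    using borel_measurable_continuous_onI by simp
  have "continuous_on UNIV (deriv \<psi>)"
    using test_fun_diff(2)[OF assms] by (meson continuous_at_imp_continuous_on differentiable_imp_continuous_within)
  then show "deriv \<psi> \<in> borel_measurable lborel"
    using borel_measurable_continuous_onI by simp
qed

lemma bump_zero:
  assumes "a < c" "x \<notin> {a..c}" "m > 0"
  shows "bump m a c x = 0"
proof -
  from assms have "(x - a) * (c - x) < 0"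
    by (auto simp: mult_less_0_iff)
  then have "m * ((x - a) * (c - x)) < 0"
    using assms mult_pos_neg by blast
  then show ?thesis
    by (auto simp: bump_def Efun_def)
qed

lemma Efun_lim: "(Efun \<longlongrightarrow> 1) at_top"
proof -
  have "((\<lambda>t::real. exp (- 1 / t)) \<longlongrightarrow> exp 0) at_top"
    by (intro tendsto_exp tendsto_divide_0[OF tendsto_const] filterlim_at_top_imp_at_infinity filterlim_ident)
  then have "((\<lambda>t::real. exp (- 1 / t)) \<longlongrightarrow> 1) at_top" by simp
  moreover have "\<forall>\<^sub>F t in at_top. exp (- 1 / t) = Efun t"
    by (auto simp: Efun_def eventually_at_top_dense intro!: exI[of _ 0])
  ultimately show ?thesis by (rule Lim_transform_eventually)
qed

lemma bump_lim:
  assumes "a < x" "x < c"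
  shows "(\<lambda>i. bump (real i + 1) (a + (c - a) / (3 + real i)) (c - (c - a) / (3 + real i)) x) \<longlonglongrightarrow> 1"
proof -
  have d: "(\<lambda>i. (c - a) / (3 + real i)) \<longlonglongrightarrow> 0"
    by (intro tendsto_divide_0[OF tendsto_const] filterlim_at_top_imp_at_infinity filterlim_tendsto_add_at_top[OF tendsto_const filterlim_real_sequentially])
  have q: "(\<lambda>i. (x - (a + (c - a) / (3 + real i))) * ((c - (c - a) / (3 + real i)) - x)) \<longlonglongrightarrow> (x - (a + 0)) * ((c - 0) - x)"
    by (intro tendsto_intros d)
  have pos: "0 < (x - (a + 0)) * ((c - 0) - x)" using assms by simp
  have "filterlim (\<lambda>i. (x - (a + (c - a) / (3 + real i))) * ((c - (c - a) / (3 + real i)) - x) * (real i + 1)) at_top sequentially"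
    by (rule filterlim_tendsto_pos_mult_at_top[OF q pos])
       (rule filterlim_at_top_mono[OF filterlim_real_sequentially], auto)
  from filterlim_compose[OF Efun_lim this] show ?thesis
    by (simp add: bump_def mult.commute)
qed

lemma weak_eq:
  assumes "weak_deriv w g1" "weak_deriv w g2" "test_fun \<psi>"
  shows "(LINT x:I01|lborel. (g1 x - g2 x) * \<psi> x) = 0"
proof -
  have i1: "set_integrable lborel I01 (\<lambda>x. g1 x * \<psi> x)" and e1: "(LINT x:I01|lborel. w x * deriv \<psi> x) = - (LINT x:I01|lborel. g1 x * \<psi> x)"
    using assms(1,3) unfolding weak_deriv_def by auto
  have i2: "set_integrable lborel I01 (\<lambda>x. g2 x * \<psi> x)" and e2: "(LINT x:I01|lborel. w x * deriv \<psi> x) = - (LINT x:I01|lborel. g2 x * \<psi> x)"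
    using assms(2,3) unfolding weak_deriv_def by auto
  have "(LINT x:I01|lborel. (g1 x - g2 x) * \<psi> x) = (LINT x:I01|lborel. g1 x * \<psi> x - g2 x * \<psi> x)"
    by (simp add: algebra_simps)
  also have "\<dots> = 0" using set_integral_diff(2)[OF i1 i2] e1 e2 by simp
  finally show ?thesis .
qed

lemma interval_zero:
  assumes L1: "L2_I g1" "L2_I g2" and W: "weak_deriv w g1" "weak_deriv w g2"
    and ac: "0 \<le> a" "a < c" "c \<le> 1"
  shows "(LINT x:I01|lborel. (g1 x - g2 x) * indicator {a<..<c} x) = 0"
proof -
  define h where "h x = g1 x - g2 x" for x
  have hi: "set_integrable lborel I01 h"
    unfolding h_def using L2_set_integrable[OF L1(1)] L2_set_integrable[OF L1(2)] by (rule set_integral_diff(1))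
  have hm[measurable]: "h \<in> borel_measurable lborel"
    using L1 unfolding h_def L2_I_def by auto
  define an where "an i = a + (c - a) / (3 + real i)" for i :: nat
  define cn where "cn i = c - (c - a) / (3 + real i)" for i :: nat
  define \<psi> where "\<psi> i = bump (real i + 1) (an i) (cn i)" for i :: nat
  have props: "0 < an i" "an i < cn i" "cn i < 1" "a < an i" "cn i < c" for i
  proof -
    define d where "d = (c - a) / (3 + real i)"
    have p: "0 < d" using ac by (simp add: d_def)
    have "d < (c - a) / 2"
      using ac unfolding d_def by (intro divide_strict_left_mono) auto
    moreover have e: "an i = a + d" "cn i = c - d" by (simp_all add: an_def cn_def d_def)
    ultimately have "d < (c - a) / 2" "an i = a + d" "cn i = c - d" by auto
    then show "0 < an i" "an i < cn i" "cn i < 1" "a < an i" "cn i < c"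
      using p ac by auto
  qed
  have test: "test_fun (\<psi> i)" for i
    unfolding \<psi>_def using props[of i] by (intro test_bump) auto
  have zero: "(LINT x:I01|lborel. h x * \<psi> i x) = 0" for i
    unfolding h_def using weak_eq[OF W test] .
  have \<psi>m[measurable]: "\<psi> i \<in> borel_measurable lborel" for i
    using test_fun_meas(1)[OF test] .
  have lim: "(\<lambda>i. \<psi> i x) \<longlonglongrightarrow> indicator {a<..<c} x" for x
  proof (cases "x \<in> {a<..<c}")
    case True
    then show ?thesis unfolding \<psi>_def an_def cn_def using bump_lim[of a x c] by simp
  next
    case False
    have "\<psi> i x = 0" for i
      unfolding \<psi>_def using props[of i] False by (intro bump_zero) auto
    then show ?thesis using False by simp
  qed
  have "(\<lambda>i. \<integral>x. indicator I01 x *\<^sub>R (h x * \<psi> i x) \<partial>lborel) \<longlonglongrightarrow> (\<integral>x. indicator I01 x *\<^sub>R (h x * indicator {a<..<c} x) \<partial>lborel)"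
  proof (rule integral_dominated_convergence[where w="\<lambda>x. indicator I01 x *\<^sub>R \<bar>h x\<bar>"])
    show "integrable lborel (\<lambda>x. indicator I01 x *\<^sub>R \<bar>h x\<bar>)"
      using set_integrable_abs[OF hi] unfolding set_integrable_def .
    show "AE x in lborel. (\<lambda>i. indicator I01 x *\<^sub>R (h x * \<psi> i x)) \<longlonglongrightarrow> indicator I01 x *\<^sub>R (h x * indicator {a<..<c} x)"
      using lim by (intro AE_I2 tendsto_intros) auto
    show "AE x in lborel. norm (indicator I01 x *\<^sub>R (h x * \<psi> i x)) \<le> indicator I01 x *\<^sub>R \<bar>h x\<bar>" for i
    proof (intro AE_I2)
      fix x
      have "\<bar>\<psi> i x\<bar> \<le> 1" using bump_bounds[of "real i + 1" "an i" "cn i" x] unfolding \<psi>_def by simp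
      then have "\<bar>h x\<bar> * \<bar>\<psi> i x\<bar> \<le> \<bar>h x\<bar>" by (simp add: mult_left_le)
      then show "norm (indicator I01 x *\<^sub>R (h x * \<psi> i x)) \<le> indicator I01 x *\<^sub>R \<bar>h x\<bar>"
        by (auto simp: indicator_def abs_mult)
    qed
  qed auto
  moreover have "(\<lambda>i. \<integral>x. indicator I01 x *\<^sub>R (h x * \<psi> i x) \<partial>lborel) = (\<lambda>i. 0)"
    using zero unfolding set_lebesgue_integral_def by simp
  ultimately have "(\<integral>x. indicator I01 x *\<^sub>R (h x * indicator {a<..<c} x) \<partial>lborel) = 0"
    using LIMSEQ_unique tendsto_const by metis
  then show ?thesis unfolding set_lebesgue_integral_def h_def .
qed

lemma ennreal_ind: "ennreal a * indicator A y = ennreal (a * indicator A y)"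
  by (auto simp: indicator_def)

lemma ae_from_intervals:
  fixes h :: "real \<Rightarrow> real"
  assumes hi: "set_integrable lborel I01 h" and hm[measurable]: "h \<in> borel_measurable lborel"
    and iv: "\<And>a c. 0 \<le> a \<Longrightarrow> a < c \<Longrightarrow> c \<le> 1 \<Longrightarrow> (LINT x:I01|lborel. h x * indicator {a<..<c} x) = 0"
  shows "AE x in lborel. x \<in> I01 \<longrightarrow> h x = 0"
proof -
  define f where "f x = ennreal (indicator I01 x * max 0 (h x))" for x
  define f' where "f' x = ennreal (indicator I01 x * max 0 (- h x))" for x
  have hI: "integrable lborel (\<lambda>x. indicator I01 x * h x)"
    using hi unfolding set_integrable_def by simp
  have habs: "integrable lborel (\<lambda>x. indicator I01 x * \<bar>h x\<bar>)"
    using set_integrable_abs[OF hi] unfolding set_integrable_def by simp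
  have intP: "integrable lborel (\<lambda>y. indicator I01 y * max 0 (s * h y) * indicator A y)"
    if "s = 1 \<or> s = -1" "A \<in> sets lborel" for s A
    by (rule Bochner_Integration.integrable_bound[OF habs]) (use that in \<open>auto simp: indicator_def\<close>)
  have key: "(\<integral>y. indicator I01 y * max 0 (h y) * indicator {x<..} y \<partial>lborel)
      = (\<integral>y. indicator I01 y * max 0 (- h y) * indicator {x<..} y \<partial>lborel)" for x
  proof -
    have "(\<integral>y. indicator I01 y * max 0 (h y) * indicator {x<..} y \<partial>lborel)
        - (\<integral>y. indicator I01 y * max 0 (- h y) * indicator {x<..} y \<partial>lborel)
        = (\<integral>y. indicator I01 y * max 0 (h y) * indicator {x<..} y - indicator I01 y * max 0 (- h y) * indicator {x<..} y \<partial>lborel)"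
      using intP[of 1 "{x<..}"] intP[of "-1" "{x<..}"] by (simp add: Bochner_Integration.integral_diff)
    also have "\<dots> = (\<integral>y. indicator I01 y * h y * indicator {x<..} y \<partial>lborel)"
      by (intro Bochner_Integration.integral_cong) (auto simp: indicator_def max_def)
    also have "\<dots> = 0"
    proof (cases "x < 1")
      case True
      have "(\<integral>y. indicator I01 y * h y * indicator {x<..} y \<partial>lborel)
          = (LINT y:I01|lborel. h y * indicator {max 0 x<..<1} y)"
        unfolding set_lebesgue_integral_def
        by (intro Bochner_Integration.integral_cong) (auto simp: indicator_def I01_def)
      also have "\<dots> = 0" using True by (intro iv) auto
      finally show ?thesis .
    next
      case False
      have "(\<lambda>y. indicator I01 y * h y * indicator {x<..} y) = (\<lambda>y. 0)"
        using False by (auto simp: fun_eq_iff indicator_def I01_def)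
      then show ?thesis by simp
    qed
    finally show ?thesis by simp
  qed
  have nnP: "(\<integral>\<^sup>+y. ennreal (indicator I01 y * max 0 (s * h y)) * indicator A y \<partial>lborel)
      = ennreal (\<integral>y. indicator I01 y * max 0 (s * h y) * indicator A y \<partial>lborel)"
    if "s = 1 \<or> s = -1" "A \<in> sets lborel" for s A
    unfolding ennreal_ind
    by (rule nn_integral_eq_integral[OF intP[OF that]]) auto
  have "density lborel f = density lborel f'"
  proof (rule measure_eqI_lessThan)
    show "sets (density lborel f) = sets borel" "sets (density lborel f') = sets borel" by auto
    show "emeasure (density lborel f) {x<..} < \<infinity>" for x
      unfolding f_def using nnP[of 1 "{x<..}"] by (subst emeasure_density) auto
    show "emeasure (density lborel f) {x<..} = emeasure (density lborel f') {x<..}" for x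
      unfolding f_def f'_def using nnP[of 1 "{x<..}"] nnP[of "-1" "{x<..}"] key[of x]
      by (subst (1 2) emeasure_density) auto
  qed
  moreover have "f \<in> borel_measurable lborel" "f' \<in> borel_measurable lborel"
    unfolding f_def f'_def by measurable
  ultimately have "AE x in lborel. f x = f' x"
    using sigma_finite_measure.density_unique[OF sigma_finite_lborel] by blast
  then show ?thesis
  proof eventually_elim
    fix x assume "f x = f' x"
    then show "x \<in> I01 \<longrightarrow> h x = 0"
      by (auto simp: f_def f'_def indicator_def max_def split: if_splits)
  qed
qed

lemma weak_deriv_unique:
  assumes "L2_I g1" "weak_deriv w g1" "L2_I g2" "weak_deriv w g2"
  shows "AE x in lborel. x \<in> I01 \<longrightarrow> g1 x = g2 x"
proof -
  have hi: "set_integrable lborel I01 (\<lambda>x. g1 x - g2 x)"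
    using L2_set_integrable[OF assms(1)] L2_set_integrable[OF assms(3)] by (rule set_integral_diff(1))
  have hm: "(\<lambda>x. g1 x - g2 x) \<in> borel_measurable lborel"
    using assms unfolding L2_I_def by auto
  have "AE x in lborel. x \<in> I01 \<longrightarrow> g1 x - g2 x = 0"
    by (rule ae_from_intervals[OF hi hm]) (rule interval_zero[OF assms(1,3,2,4)])
  then show ?thesis by eventually_elim auto
qed

definition P :: "real \<Rightarrow> real \<Rightarrow> real" where "P s u = u powr s - u"
definition T :: "real \<Rightarrow> real \<Rightarrow> real" where "T b x = max 0 (min (x/b) ((1-x)/(1-b)))"

lemma P_bound:
  assumes s: "7/8 \<le> s" "s < 1" and u: "0 \<le> u" "u \<le> 1"
  shows "0 \<le> P s u" "P s u \<le> 8 * (1 - s) * u powr (3/4)"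
proof -
  have "0 \<le> P s u \<and> P s u \<le> 8 * (1 - s) * u powr (3/4)"
  proof (cases "u = 0")
    case True then show ?thesis by (simp add: P_def)
  next
    case False
    then have up: "u > 0" using u by simp
    define l where "l = ln u"
    have l0: "l \<le> 0" using u up by (simp add: l_def)
    have e1: "u powr s = exp (s * l)" "u = exp l" "u powr (3/4) = exp (3/4 * l)"
      using up by (simp_all add: l_def powr_def)
    have P: "P s u = exp (s * l) * (1 - exp ((1 - s) * l))"
    proof -
      have "exp l = exp (s * l) * exp ((1 - s) * l)" by (simp add: exp_add[symmetric] algebra_simps)
      then show ?thesis unfolding P_def using e1 by (simp add: algebra_simps)
    qed
    have a: "1 - exp ((1 - s) * l) \<le> (1 - s) * (- l)"
      using exp_ge_add_one_self[of "(1 - s) * l"] by (simp add: algebra_simps)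
    have "(1 - s) * l \<le> 0" using l0 s by (intro mult_nonneg_nonpos) auto
    then have a0: "0 \<le> 1 - exp ((1 - s) * l)" by simp
    have "(s - 7/8) * l \<le> 0" using s l0 by (intro mult_nonneg_nonpos) auto
    then have b: "exp (s * l) \<le> exp (7/8 * l)"
      by (simp add: algebra_simps)
    have c: "exp (l / 8) * (- l) \<le> 8"
    proof -
      have "- l / 8 \<le> exp (- l / 8)" using exp_ge_add_one_self[of "- l / 8"] by simp
      then have "- l \<le> 8 * exp (- l / 8)" by simp
      then have "exp (l / 8) * (- l) \<le> exp (l / 8) * (8 * exp (- l / 8))"
        by (intro mult_left_mono) auto
      also have "\<dots> = 8" by (simp add: exp_minus field_simps)
      finally show ?thesis .
    qed
    have "P s u \<le> exp (s * l) * ((1 - s) * (- l))"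
      unfolding P by (intro mult_left_mono a) auto
    also have "\<dots> \<le> exp (7/8 * l) * ((1 - s) * (- l))"
      using l0 s by (intro mult_right_mono b mult_nonneg_nonneg) auto
    also have "\<dots> = (1 - s) * exp (3/4 * l) * (exp (l / 8) * (- l))"
      by (simp add: exp_add[symmetric] algebra_simps)
    also have "\<dots> \<le> (1 - s) * exp (3/4 * l) * 8"
      using s by (intro mult_left_mono c) auto
    finally have "P s u \<le> 8 * (1 - s) * exp (3/4 * l)" by (simp add: algebra_simps)
    then have "P s u \<le> 8 * (1 - s) * u powr (3/4)" using e1(3) by simp
    moreover have "0 \<le> P s u" unfolding P using a0 by simp
    ultimately show ?thesis by simp
  qed
  then show "0 \<le> P s u" "P s u \<le> 8 * (1 - s) * u powr (3/4)" by auto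
qed

lemma dP_bound:
  fixes s t :: real
  assumes s: "7/8 \<le> s" "s < 1" and t: "0 < t" "t \<le> 1"
  shows "\<bar>s * t powr (s - 1) - 1\<bar> \<le> 9 * (1 - s) * t powr (-1/4)"
proof -
  define L where "L = - ln t"
  have "ln t \<le> 0" using t by simp
  then have L0: "L \<ge> 0" by (simp add: L_def)
  define a where "a = 1 - s"
  have a: "0 < a" "a \<le> 1/8" using s by (auto simp: a_def)
  define E where "E = exp (a * L)"
  have tE: "t powr (s - 1) = E" and tq: "t powr (-1/4) = exp (L / 4)"
    using t by (simp_all add: powr_def E_def L_def a_def algebra_simps)
  have E1: "E \<ge> 1" using a L0 by (simp add: E_def)
  have lo: "s * E - 1 \<ge> - a"
  proof -
    have "s * 1 \<le> s * E" using E1 s by (intro mult_left_mono) auto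
    then show ?thesis by (simp add: a_def)
  qed
  have hi1: "E - 1 \<le> a * L * E"
  proof -
    have "1 - a * L \<le> exp (- (a * L))" using exp_ge_add_one_self[of "- (a * L)"] by simp
    then have "E * (1 - a * L) \<le> E * exp (- (a * L))" using E1 by (intro mult_left_mono) auto
    also have "E * exp (- (a * L)) = 1" by (simp add: E_def exp_minus)
    finally show ?thesis by (simp add: algebra_simps)
  qed
  have hi0: "s * E - 1 \<le> E - 1"
  proof -
    have "s * E \<le> 1 * E" using s E1 by (intro mult_right_mono) auto
    then show ?thesis by simp
  qed
  have "a * L \<le> (1/8) * L" using a L0 by (intro mult_right_mono) auto
  then have Eb: "E \<le> exp (L / 8)" unfolding E_def by simp
  have c: "L * exp (L / 8) \<le> 8 * exp (L / 4)"
  proof -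
    have "L / 8 \<le> exp (L / 8)" using exp_ge_add_one_self[of "L / 8"] by linarith
    then have "L * exp (L / 8) \<le> (8 * exp (L / 8)) * exp (L / 8)" by (intro mult_right_mono) auto
    also have "\<dots> = 8 * exp (L / 4)" by (simp add: exp_add[symmetric])
    finally show ?thesis .
  qed
  have "a * L * E \<le> a * L * exp (L / 8)"
    using a L0 Eb by (intro mult_left_mono) auto
  also have "\<dots> = a * (L * exp (L / 8))" by simp
  also have "\<dots> \<le> a * (8 * exp (L / 4))" using a c by (intro mult_left_mono) auto
  finally have hi: "s * E - 1 \<le> 8 * a * exp (L / 4)" using hi0 hi1 by simp
  have ex1: "1 \<le> exp (L / 4)" using L0 by simp
  have "a \<le> a * exp (L / 4)" using a ex1 by (simp add: mult_le_cancel_left1)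
  moreover have "9 * a * exp (L / 4) = 8 * a * exp (L / 4) + a * exp (L / 4)" by simp
  moreover have "0 \<le> a * exp (L / 4)" using a by simp
  ultimately have "- (9 * a * exp (L / 4)) \<le> s * E - 1 \<and> s * E - 1 \<le> 9 * a * exp (L / 4)"
    using lo hi by linarith
  then have "\<bar>s * E - 1\<bar> \<le> 9 * a * exp (L / 4)"
    by (simp only: abs_le_iff) auto
  then show ?thesis using tE tq by (simp add: a_def)
qed

lemma P_deriv:
  assumes "u > 0"
  shows "(P s has_real_derivative (s * u powr (s - 1) - 1)) (at u)"
  unfolding P_def using assms by (auto intro!: derivative_eq_intros)

lemma P_pair:
  assumes s: "7/8 \<le> s" "s < 1" and uv: "0 \<le> u" "u \<le> v" "v \<le> 1"
  shows "\<bar>P s v - P s u\<bar> \<le> 9 * (1 - s) * (v - u) * (u powr (-1/4) + v powr (-1/4))"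
proof (cases "u = 0")
  case True
  show ?thesis
  proof (cases "v = 0")
    case True then show ?thesis using \<open>u = 0\<close> by (simp add: P_def)
  next
    case False
    then have vp: "v > 0" using uv by simp
    have "v powr (3/4) = v * v powr (-1/4)"
      using vp powr_add[of v 1 "-1/4"] by simp
    then have "\<bar>P s v\<bar> \<le> 8 * (1 - s) * (v * v powr (-1/4))"
      using P_bound[OF s, of v] uv by simp
    also have "\<dots> \<le> 9 * (1 - s) * (v * v powr (-1/4))"
      using s vp by (intro mult_right_mono) auto
    finally show ?thesis using True by (simp add: P_def)
  qed
next
  case False
  then have up: "u > 0" using uv by simp
  show ?thesis
  proof (cases "u = v")
    case True then show ?thesis by simp
  next
    case False
    then have "u < v" using uv by simp
    then obtain z where z: "u < z" "z < v" "P s v - P s u = (v - u) * (s * z powr (s - 1) - 1)"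
      using MVT2[of u v "P s" "\<lambda>z. s * z powr (s - 1) - 1"] P_deriv up by force
    have "\<bar>s * z powr (s - 1) - 1\<bar> \<le> 9 * (1 - s) * z powr (-1/4)"
      using dP_bound[OF s, of z] z up uv by simp
    also have "\<dots> \<le> 9 * (1 - s) * u powr (-1/4)"
      using s z up by (intro mult_left_mono powr_mono2') auto
    also have "\<dots> \<le> 9 * (1 - s) * (u powr (-1/4) + v powr (-1/4))"
      using s by (intro mult_left_mono) auto
    finally have "\<bar>P s v - P s u\<bar> \<le> (v - u) * (9 * (1 - s) * (u powr (-1/4) + v powr (-1/4)))"
      using z \<open>u < v\<close> by (simp add: abs_mult mult_left_mono)
    then show ?thesis by (simp add: algebra_simps)
  qed
qed

lemma T_simp:
  assumes b: "0 < b" "b < 1"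
  shows "0 \<le> x \<Longrightarrow> x \<le> b \<Longrightarrow> T b x = x / b"
    and "b < x \<Longrightarrow> x \<le> 1 \<Longrightarrow> T b x = (1 - x) / (1 - b)"
    and "x < 0 \<or> 1 < x \<Longrightarrow> T b x = 0"
proof -
  assume x: "0 \<le> x" "x \<le> b"
  have "x * (1 - b) \<le> (1 - x) * b" using x b by (simp add: algebra_simps)
  then have "x / b \<le> (1 - x) / (1 - b)" using b by (simp add: divide_simps)
  then show "T b x = x / b" using x b by (simp add: T_def)
next
  assume x: "b < x" "x \<le> 1"
  have "(1 - x) * b \<le> x * (1 - b)" using x b by (simp add: algebra_simps)
  then have "(1 - x) / (1 - b) \<le> x / b" using b by (simp add: divide_simps)
  moreover have "0 \<le> (1 - x) / (1 - b)" using x b by simp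
  ultimately show "T b x = (1 - x) / (1 - b)" by (simp add: T_def)
next
  assume "x < 0 \<or> 1 < x"
  then show "T b x = 0"
  proof
    assume "x < 0" then have "x / b < 0" using b by (simp add: divide_neg_pos)
    then show ?thesis by (simp add: T_def)
  next
    assume "1 < x" then have "(1 - x) / (1 - b) < 0" using b by (simp add: divide_neg_pos)
    then show ?thesis by (simp add: T_def)
  qed
qed

lemma w_eq:
  assumes b: "0 < b" "b < 1"
  shows "phi_s s b x - phi b x = P s (T b x)"
proof -
  consider "0 \<le> x \<and> x \<le> b" | "b < x \<and> x \<le> 1" | "x < 0 \<or> 1 < x" by linarith
  then show ?thesis
  proof cases
    case 1 then show ?thesis using T_simp(1)[OF b, of x] by (simp add: phi_s_def phi_def P_def powr_divide)
  next
    case 2 then show ?thesis using T_simp(2)[OF b, of x] b by (simp add: phi_s_def phi_def P_def powr_divide)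
  next
    case 3 then show ?thesis using T_simp(3)[OF b, of x] b by (auto simp: phi_s_def phi_def P_def)
  qed
qed

lemma T_range:
  assumes b: "0 < b" "b < 1"
  shows "0 \<le> T b x" "T b x \<le> 1"
proof -
  show "0 \<le> T b x" by (simp add: T_def)
  consider "0 \<le> x \<and> x \<le> b" | "b < x \<and> x \<le> 1" | "x < 0 \<or> 1 < x" by linarith
  then show "T b x \<le> 1"
  proof cases
    case 1 then show ?thesis using T_simp(1)[OF b, of x] b by simp
  next
    case 2 then show ?thesis using T_simp(2)[OF b, of x] b by simp
  next
    case 3 then show ?thesis using T_simp(3)[OF b, of x] by simp
  qed
qed

lemma T_out:
  assumes b: "0 < b" "b < 1" and x: "x \<notin> {0<..<1}"
  shows "T b x = 0"
proof -
  consider "x \<le> 0" | "1 \<le> x" using x by force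
  then show ?thesis
  proof cases
    case 1 then have "x / b \<le> 0" using b by (simp add: divide_nonpos_pos)
    then show ?thesis by (simp add: T_def)
  next
    case 2 then have "(1 - x) / (1 - b) \<le> 0" using b by (simp add: divide_nonpos_pos)
    then show ?thesis by (simp add: T_def)
  qed
qed

lemma T_lower:
  assumes b: "0 < b" "b < 1" and x: "0 < x" "x < 1"
  shows "min x (1 - x) \<le> T b x"
proof -
  have "x \<le> x / b" using b x by (simp add: le_divide_eq)
  moreover have "1 - x \<le> (1 - x) / (1 - b)" using b x by (simp add: le_divide_eq)
  ultimately show ?thesis by (auto simp: T_def)
qed

lemma max0_lip: "\<bar>max 0 p - max 0 q\<bar> \<le> \<bar>p - q\<bar>" for p q :: real
  by (auto simp: max_def)

lemma min_lip: "\<bar>min p1 p2 - min q1 q2\<bar> \<le> \<bar>p1 - q1\<bar> + \<bar>p2 - q2\<bar>" for p1 p2 q1 q2 :: real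
  by (auto simp: min_def)

lemma T_lip:
  assumes b: "0 < b" "b < 1"
  shows "\<bar>T b x - T b y\<bar> \<le> (1/b + 1/(1-b)) * \<bar>x - y\<bar>"
proof -
  have "\<bar>T b x - T b y\<bar> \<le> \<bar>x / b - y / b\<bar> + \<bar>(1 - x) / (1 - b) - (1 - y) / (1 - b)\<bar>"
    unfolding T_def using max0_lip min_lip order_trans by blast
  also have "\<bar>x / b - y / b\<bar> = \<bar>x - y\<bar> / b" using b by (simp add: diff_divide_distrib[symmetric])
  also have "\<bar>(1 - x) / (1 - b) - (1 - y) / (1 - b)\<bar> = \<bar>x - y\<bar> / (1 - b)"
    using b by (simp add: diff_divide_distrib[symmetric] abs_minus_commute)
  finally show ?thesis by (simp add: algebra_simps)
qed

definition wfn :: "real \<Rightarrow> real \<Rightarrow> real \<Rightarrow> real" where "wfn s b x = P s (T b x)"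

lemma wfn_pair:
  assumes b: "0 < b" "b < 1" and s: "7/8 \<le> s" "s < 1"
  shows "\<bar>wfn s b x - wfn s b y\<bar> \<le> 9 * (1 - s) * (1/b + 1/(1-b)) * \<bar>x - y\<bar> * (T b x powr (-1/4) + T b y powr (-1/4))"
proof -
  have main: "\<bar>P s v - P s u\<bar> \<le> 9 * (1 - s) * (1/b + 1/(1-b)) * \<bar>x - y\<bar> * (u powr (-1/4) + v powr (-1/4))"
    if uv: "u = T b x \<and> v = T b y \<or> u = T b y \<and> v = T b x" and le: "u \<le> v" for u v
  proof -
    have r: "0 \<le> u" "v \<le> 1" using uv T_range[OF b] by auto
    have "v - u \<le> (1/b + 1/(1-b)) * \<bar>x - y\<bar>"
      using uv T_lip[OF b, of x y] T_lip[OF b, of y x] by (auto simp: abs_minus_commute)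
    have "\<bar>P s v - P s u\<bar> \<le> 9 * (1 - s) * (v - u) * (u powr (-1/4) + v powr (-1/4))"
      using P_pair[OF s r(1) le r(2)] .
    also have "\<dots> \<le> 9 * (1 - s) * ((1/b + 1/(1-b)) * \<bar>x - y\<bar>) * (u powr (-1/4) + v powr (-1/4))"
      using s \<open>v - u \<le> _\<close> by (intro mult_right_mono mult_left_mono) auto
    finally show ?thesis by (simp add: mult.assoc)
  qed
  show ?thesis
  proof (cases "T b x \<le> T b y")
    case True
    then show ?thesis using main[of "T b x" "T b y"] by (simp add: wfn_def abs_minus_commute)
  next
    case False
    then show ?thesis using main[of "T b y" "T b x"] by (simp add: wfn_def add.commute)
  qed
qed

lemma wfn_bound:
  assumes b: "0 < b" "b < 1" and s: "7/8 \<le> s" "s < 1"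
  shows "\<bar>wfn s b x\<bar> \<le> 8 * (1 - s) * indicator {0<..<1} x"
proof (cases "x \<in> {0<..<1}")
  case True
  have r: "0 \<le> T b x" "T b x \<le> 1" using T_range[OF b] by auto
  have "T b x powr (3/4) \<le> 1" using r by (intro powr_le1) auto
  then have "8 * (1 - s) * T b x powr (3/4) \<le> 8 * (1 - s) * 1"
    using s by (intro mult_left_mono) auto
  then have "P s (T b x) \<le> 8 * (1 - s) * 1"
    using P_bound(2)[OF s r] by linarith
  then show ?thesis using P_bound(1)[OF s r] True by (simp add: wfn_def)
next
  case False
  then show ?thesis using T_out[OF b False] by (simp add: wfn_def P_def)
qed

definition Q :: "real \<Rightarrow> real" where
  "Q x = indicator {0<..<1} x * (\<bar>x\<bar> powr (-1/2) + \<bar>x - 1\<bar> powr (-1/2))"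

lemma Q_nonneg: "Q x \<ge> 0" by (simp add: Q_def)

lemma T_weight:
  assumes b: "0 < b" "b < 1"
  shows "(T b x powr (-1/4))^2 \<le> Q x"
proof -
  have sq: "(T b x powr (-1/4))^2 = T b x powr (-1/2)"
    by (simp add: power2_eq_square powr_add[symmetric])
  show ?thesis
  proof (cases "x \<in> {0<..<1}")
    case True
    then have x: "0 < x" "x < 1" by auto
    define m where "m = min x (1 - x)"
    have m: "0 < m" "m \<le> T b x" using x T_lower[OF b x] by (auto simp: m_def)
    have "T b x powr (-1/2) \<le> m powr (-1/2)" using m by (intro powr_mono2') auto
    also have "m powr (-1/2) \<le> \<bar>x\<bar> powr (-1/2) + \<bar>x - 1\<bar> powr (-1/2)"
      using x by (cases "x \<le> 1 - x") (auto simp: m_def min_def abs_minus_commute)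
    finally show ?thesis using sq True by (simp add: Q_def)
  next
    case False
    then show ?thesis using sq T_out[OF b False] by (simp add: Q_def)
  qed
qed

lemma nn_powr_0r:
  assumes "p > -1" "r \<ge> 0"
  shows "(\<integral>\<^sup>+t. ennreal (indicator {0..r} t * t powr p) \<partial>lborel) = ennreal (r powr (p+1) / (p+1))"
proof -
  have "((\<lambda>t. if t \<in> {0..r} then t powr p else 0) has_integral (r powr (p+1) / (p+1))) UNIV"
    by (subst has_integral_restrict_UNIV) (rule has_integral_powr_from_0[OF assms])
  moreover have "(\<lambda>t. if t \<in> {0..r} then t powr p else 0) = (\<lambda>t. indicator {0..r} t * t powr p)"
    by (auto simp: indicator_def fun_eq_iff)
  ultimately have "((\<lambda>t. indicator {0..r} t * t powr p) has_integral (r powr (p+1) / (p+1))) UNIV"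
    by simp
  then show ?thesis
    by (intro nn_integral_has_integral_lborel) auto
qed

lemma nn_powr_1inf:
  assumes "p < -1"
  shows "(\<integral>\<^sup>+t. ennreal (indicator {1..} t * t powr p) \<partial>lborel) = ennreal (- 1 / (p+1))"
proof -
  have "((\<lambda>t. if t \<in> {1..} then t powr p else 0) has_integral (- 1 / (p+1))) UNIV"
    using has_integral_powr_to_inf[OF assms, of 1] by (subst has_integral_restrict_UNIV) simp
  moreover have "(\<lambda>t. if t \<in> {1..} then t powr p else 0) = (\<lambda>t. indicator {1..} t * t powr p)"
    by (auto simp: indicator_def fun_eq_iff)
  ultimately have "((\<lambda>t. indicator {1..} t * t powr p) has_integral (- 1 / (p+1))) UNIV"
    by simp
  then show ?thesis
    by (intro nn_integral_has_integral_lborel) auto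
qed

lemma nn_reflect:
  fixes f :: "real \<Rightarrow> ennreal"
  assumes [measurable]: "f \<in> borel_measurable borel"
  shows "(\<integral>\<^sup>+t. f (- t) \<partial>lborel) = (\<integral>\<^sup>+t. f t \<partial>lborel)"
  using nn_integral_real_affine[OF assms, of "-1" 0] by simp

lemma nn_transl:
  fixes f :: "real \<Rightarrow> ennreal"
  assumes [measurable]: "f \<in> borel_measurable borel"
  shows "(\<integral>\<^sup>+y. f (x - y) \<partial>lborel) = (\<integral>\<^sup>+t. f t \<partial>lborel)"
    and "(\<integral>\<^sup>+y. f (y - x) \<partial>lborel) = (\<integral>\<^sup>+t. f t \<partial>lborel)"
proof -
  have m2[measurable]: "(\<lambda>y. f (x - y)) \<in> borel_measurable borel" by measurable
  show "(\<integral>\<^sup>+y. f (x - y) \<partial>lborel) = (\<integral>\<^sup>+t. f t \<partial>lborel)"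
    using nn_integral_real_affine[OF m2, of "-1" x] by simp
  have m3[measurable]: "(\<lambda>y. f (y - x)) \<in> borel_measurable borel" by measurable
  show "(\<integral>\<^sup>+y. f (y - x) \<partial>lborel) = (\<integral>\<^sup>+t. f t \<partial>lborel)"
    using nn_integral_real_affine[OF m3, of 1 x] by simp
qed

lemma near_kernel:
  assumes "p > -1" "r \<ge> 0"
  shows "(\<integral>\<^sup>+t. ennreal (indicator {t. \<bar>t\<bar> \<le> r} t * \<bar>t\<bar> powr p) \<partial>lborel) \<le> ennreal (2 * (r powr (p+1) / (p+1)))"
proof -
  define h where "h t = indicator {0..r} t * t powr p" for t :: real
  have hm[measurable]: "(\<lambda>t. ennreal (h t)) \<in> borel_measurable borel" unfolding h_def by measurable
  have "(\<integral>\<^sup>+t. ennreal (indicator {t. \<bar>t\<bar> \<le> r} t * \<bar>t\<bar> powr p) \<partial>lborel)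
      \<le> (\<integral>\<^sup>+t. ennreal (h t) + ennreal (h (-t)) \<partial>lborel)"
  proof (intro nn_integral_mono)
    fix t :: real
    have "indicator {t. \<bar>t\<bar> \<le> r} t * \<bar>t\<bar> powr p \<le> h t + h (-t)"
      by (cases "t \<ge> 0") (auto simp: h_def indicator_def)
    moreover have "h t \<ge> 0" "h (-t) \<ge> 0" by (auto simp: h_def indicator_def)
    ultimately show "ennreal (indicator {t. \<bar>t\<bar> \<le> r} t * \<bar>t\<bar> powr p) \<le> ennreal (h t) + ennreal (h (-t))"
      by (simp add: ennreal_plus[symmetric] del: ennreal_plus)
  qed
  also have "\<dots> = (\<integral>\<^sup>+t. ennreal (h t) \<partial>lborel) + (\<integral>\<^sup>+t. ennreal (h (-t)) \<partial>lborel)"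
    by (rule nn_integral_add) auto
  also have "(\<integral>\<^sup>+t. ennreal (h (-t)) \<partial>lborel) = (\<integral>\<^sup>+t. ennreal (h t) \<partial>lborel)"
    using nn_reflect[OF hm] .
  also have "(\<integral>\<^sup>+t. ennreal (h t) \<partial>lborel) = ennreal (r powr (p+1) / (p+1))"
    unfolding h_def using nn_powr_0r[OF assms] .
  finally show ?thesis
    using assms by (simp add: ennreal_plus[symmetric] del: ennreal_plus)
qed

lemma far_kernel:
  assumes "p < -1"
  shows "(\<integral>\<^sup>+t. ennreal (indicator {t. 1 < \<bar>t\<bar>} t * \<bar>t\<bar> powr p) \<partial>lborel) \<le> ennreal (2 * (- 1 / (p+1)))"
proof -
  define h where "h t = indicator {1..} t * t powr p" for t :: real
  have hm[measurable]: "(\<lambda>t. ennreal (h t)) \<in> borel_measurable borel" unfolding h_def by measurable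
  have "(\<integral>\<^sup>+t. ennreal (indicator {t. 1 < \<bar>t\<bar>} t * \<bar>t\<bar> powr p) \<partial>lborel)
      \<le> (\<integral>\<^sup>+t. ennreal (h t) + ennreal (h (-t)) \<partial>lborel)"
  proof (intro nn_integral_mono)
    fix t :: real
    have "indicator {t. 1 < \<bar>t\<bar>} t * \<bar>t\<bar> powr p \<le> h t + h (-t)"
      by (cases "t \<ge> 0") (auto simp: h_def indicator_def)
    moreover have "h t \<ge> 0" "h (-t) \<ge> 0" by (auto simp: h_def indicator_def)
    ultimately show "ennreal (indicator {t. 1 < \<bar>t\<bar>} t * \<bar>t\<bar> powr p) \<le> ennreal (h t) + ennreal (h (-t))"
      by (simp add: ennreal_plus[symmetric] del: ennreal_plus)
  qed
  also have "\<dots> = (\<integral>\<^sup>+t. ennreal (h t) \<partial>lborel) + (\<integral>\<^sup>+t. ennreal (h (-t)) \<partial>lborel)"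
    by (rule nn_integral_add) auto
  also have "(\<integral>\<^sup>+t. ennreal (h (-t)) \<partial>lborel) = (\<integral>\<^sup>+t. ennreal (h t) \<partial>lborel)"
    using nn_reflect[OF hm] .
  also have "(\<integral>\<^sup>+t. ennreal (h t) \<partial>lborel) = ennreal (- 1 / (p+1))"
    unfolding h_def using nn_powr_1inf[OF assms] .
  finally show ?thesis
    using assms by (simp add: ennreal_plus[symmetric] del: ennreal_plus)
qed

lemma double_sym:
  fixes k a :: "real \<Rightarrow> real"
  assumes km[measurable]: "k \<in> borel_measurable borel" and am[measurable]: "a \<in> borel_measurable borel"
    and kn: "\<And>t. k t \<ge> 0" and an: "\<And>t. a t \<ge> 0" and keven: "\<And>t. k (- t) = k t"
    and kb: "(\<integral>\<^sup>+t. ennreal (k t) \<partial>lborel) \<le> ennreal K"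
  shows "(\<integral>\<^sup>+x. (\<integral>\<^sup>+y. ennreal (k (x - y) * (a x + a y)) \<partial>lborel) \<partial>lborel)
      \<le> 2 * ennreal K * (\<integral>\<^sup>+x. ennreal (a x) \<partial>lborel)"
proof -
  have inner1: "(\<integral>\<^sup>+y. ennreal (k (x - y)) \<partial>lborel) \<le> ennreal K" for x
    using nn_transl(1)[of "\<lambda>t. ennreal (k t)" x] kb by simp
  have inner2: "(\<integral>\<^sup>+x. ennreal (k (x - y)) \<partial>lborel) \<le> ennreal K" for y
  proof -
    have "(\<integral>\<^sup>+x. ennreal (k (x - y)) \<partial>lborel) = (\<integral>\<^sup>+x. ennreal (k (y - x)) \<partial>lborel)"
      using keven by (metis minus_diff_eq)
    then show ?thesis using nn_transl(1)[of "\<lambda>t. ennreal (k t)" y] kb by simp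
  qed
  have split: "ennreal (k (x - y) * (a x + a y)) = ennreal (a x) * ennreal (k (x - y)) + ennreal (a y) * ennreal (k (x - y))" for x y
  proof -
    have "k (x - y) * (a x + a y) = a x * k (x - y) + a y * k (x - y)" by (simp add: algebra_simps)
    then have "ennreal (k (x - y) * (a x + a y)) = ennreal (a x * k (x - y)) + ennreal (a y * k (x - y))"
      using kn an by (simp add: ennreal_plus[symmetric] del: ennreal_plus)
    also have "\<dots> = ennreal (a x) * ennreal (k (x - y)) + ennreal (a y) * ennreal (k (x - y))"
      using kn an by (simp add: ennreal_mult)
    finally show ?thesis .
  qed
  let ?A = "\<integral>\<^sup>+x. ennreal (a x) \<partial>lborel"
  have eq1: "(\<integral>\<^sup>+x. (\<integral>\<^sup>+y. ennreal (k (x - y) * (a x + a y)) \<partial>lborel) \<partial>lborel)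
      = (\<integral>\<^sup>+x. (\<integral>\<^sup>+y. ennreal (a x) * ennreal (k (x - y)) \<partial>lborel) \<partial>lborel)
      + (\<integral>\<^sup>+x. (\<integral>\<^sup>+y. ennreal (a y) * ennreal (k (x - y)) \<partial>lborel) \<partial>lborel)"
    unfolding split by (subst nn_integral_add[symmetric]) (auto intro!: nn_integral_cong nn_integral_add)
  have b2: "(\<integral>\<^sup>+x. (\<integral>\<^sup>+y. ennreal (a y) * ennreal (k (x - y)) \<partial>lborel) \<partial>lborel) \<le> ennreal K * ?A"
  proof -
    have "(\<integral>\<^sup>+x. (\<integral>\<^sup>+y. ennreal (a y) * ennreal (k (x - y)) \<partial>lborel) \<partial>lborel)
      = (\<integral>\<^sup>+y. (\<integral>\<^sup>+x. ennreal (a y) * ennreal (k (x - y)) \<partial>lborel) \<partial>lborel)"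
      by (rule lborel_pair.Fubini'[symmetric]) measurable
    also have "\<dots> = (\<integral>\<^sup>+y. ennreal (a y) * (\<integral>\<^sup>+x. ennreal (k (x - y)) \<partial>lborel) \<partial>lborel)"
      by (intro nn_integral_cong nn_integral_cmult) auto
    also have "\<dots> \<le> (\<integral>\<^sup>+y. ennreal (a y) * ennreal K \<partial>lborel)"
      by (intro nn_integral_mono mult_left_mono inner2) auto
    also have "\<dots> = ennreal K * ?A"
      by (subst nn_integral_multc) (auto simp: mult.commute)
    finally show ?thesis .
  qed
  have b1: "(\<integral>\<^sup>+x. (\<integral>\<^sup>+y. ennreal (a x) * ennreal (k (x - y)) \<partial>lborel) \<partial>lborel) \<le> ennreal K * ?A"
  proof -
    have "(\<integral>\<^sup>+x. (\<integral>\<^sup>+y. ennreal (a x) * ennreal (k (x - y)) \<partial>lborel) \<partial>lborel)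
      = (\<integral>\<^sup>+x. ennreal (a x) * (\<integral>\<^sup>+y. ennreal (k (x - y)) \<partial>lborel) \<partial>lborel)"
      by (intro nn_integral_cong nn_integral_cmult) auto
    also have "\<dots> \<le> (\<integral>\<^sup>+x. ennreal (a x) * ennreal K \<partial>lborel)"
      by (intro nn_integral_mono mult_left_mono inner1) auto
    also have "\<dots> = ennreal K * ?A"
      by (subst nn_integral_multc) (auto simp: mult.commute)
    finally show ?thesis .
  qed
  have "ennreal K * ?A + ennreal K * ?A = 2 * ennreal K * ?A"
    by (simp add: mult_2 distrib_right)
  then show ?thesis
    unfolding eq1 using add_mono[OF b1 b2] by simp
qed

definition Nk :: "real \<Rightarrow> real \<Rightarrow> real" where
  "Nk s t = indicator {t. \<bar>t\<bar> \<le> 1} t * \<bar>t\<bar> powr (1 - 2 * s)"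
definition Fk :: "real \<Rightarrow> real \<Rightarrow> real" where
  "Fk s t = indicator {t. 1 < \<bar>t\<bar>} t * \<bar>t\<bar> powr (-1 - 2 * s)"
definition J :: "real \<Rightarrow> real" where "J x = indicator {0<..<1} x"

lemma meas_basic[measurable]:
  "Nk s \<in> borel_measurable borel" "Fk s \<in> borel_measurable borel" "Q \<in> borel_measurable borel"
  "J \<in> borel_measurable borel"
  unfolding Nk_def Fk_def Q_def J_def by measurable

lemma T_meas[measurable]: "T b \<in> borel_measurable borel"
  unfolding T_def by (intro borel_measurable_max borel_measurable_min borel_measurable_divide) auto

lemma P_meas[measurable]: "P s \<in> borel_measurable borel"
  unfolding P_def by measurable

lemma wfn_meas[measurable]: "wfn s b \<in> borel_measurable borel"
  unfolding wfn_def by (rule measurable_compose[OF T_meas P_meas])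

lemma powr_sq_div:
  fixes d s :: real
  assumes "d > 0"
  shows "d^2 / d powr (1 + 2 * s) = d powr (1 - 2 * s)"
proof -
  have "d^2 / d powr (1 + 2 * s) = d powr 2 / d powr (1 + 2 * s)" using assms by (simp add: powr_numeral)
  also have "d powr 2 / d powr (1 + 2 * s) = d powr (2 - (1 + 2 * s))" by (rule powr_diff[symmetric])
  also have "2 - (1 + 2 * s) = 1 - 2 * s" by simp
  finally show ?thesis .
qed

lemma powr_inv_div:
  fixes d s :: real
  assumes "d > 0"
  shows "1 / d powr (1 + 2 * s) = d powr (-1 - 2 * s)"
  using assms by (simp add: powr_minus_divide[symmetric])

lemma sq_sum_le: "(a + b)^2 \<le> 2 * (a^2 + b^2)" for a b :: real
proof -
  have "0 \<le> (a - b)^2" by simp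
  moreover have "2 * (a^2 + b^2) - (a + b)^2 = (a - b)^2" by (simp add: power2_eq_square algebra_simps)
  ultimately show ?thesis by linarith
qed

lemma sq_diff_le: "(a - b)^2 \<le> 2 * (a^2 + b^2)" for a b :: real
proof -
  have "0 \<le> (a + b)^2" by simp
  moreover have "2 * (a^2 + b^2) - (a - b)^2 = (a + b)^2" by (simp add: power2_eq_square algebra_simps)
  ultimately show ?thesis by linarith
qed

lemma F_bound:
  assumes b: "0 < b" "b < 1" and s: "7/8 \<le> s" "s < 1"
  shows "(wfn s b x - wfn s b y)^2 / \<bar>x - y\<bar> powr (1 + 2 * s)
    \<le> (1 - s)^2 * (162 * (1/b + 1/(1-b))^2) * (Nk s (x - y) * (Q x + Q y))
      + (1 - s)^2 * 128 * (Fk s (x - y) * (J x + J y))"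
    (is "?L \<le> ?R1 + ?R2")
proof -
  define Lt where "Lt = 1/b + 1/(1-b)"
  have Lt0: "Lt \<ge> 0" using b by (simp add: Lt_def)
  have R1: "?R1 \<ge> 0" using Q_nonneg[of x] Q_nonneg[of y] by (simp add: Nk_def)
  have R2: "?R2 \<ge> 0" by (simp add: Fk_def J_def)
  define d where "d = \<bar>x - y\<bar>"
  have "d \<ge> 0" by (simp add: d_def)
  then consider "d = 0" | "0 < d \<and> d \<le> 1" | "1 < d" by linarith
  then show ?thesis
  proof cases
    case 1
    then have "x = y" by (simp add: d_def)
    then show ?thesis using R1 R2 by simp
  next
    case 2
    define rx where "rx = T b x powr (-1/4)"
    define ry where "ry = T b y powr (-1/4)"
    have "\<bar>wfn s b x - wfn s b y\<bar> \<le> 9 * (1 - s) * Lt * d * (rx + ry)"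
      using wfn_pair[OF b s, of x y] by (simp add: Lt_def d_def rx_def ry_def)
    then have "\<bar>wfn s b x - wfn s b y\<bar>^2 \<le> (9 * (1 - s) * Lt * d * (rx + ry))^2"
      by (intro power_mono) auto
    also have "\<dots> = 81 * (1 - s)^2 * Lt^2 * d^2 * (rx + ry)^2" by (simp only: power_mult_distrib) simp
    also have "\<dots> \<le> 81 * (1 - s)^2 * Lt^2 * d^2 * (2 * (Q x + Q y))"
    proof (intro mult_left_mono)
      have "(rx + ry)^2 \<le> 2 * (rx^2 + ry^2)" by (rule sq_sum_le)
      also have "\<dots> \<le> 2 * (Q x + Q y)" using T_weight[OF b, of x] T_weight[OF b, of y]
        by (simp add: rx_def ry_def)
      finally show "(rx + ry)^2 \<le> 2 * (Q x + Q y)" .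
    qed auto
    finally have num0: "\<bar>wfn s b x - wfn s b y\<bar>^2 \<le> 81 * (1 - s)^2 * Lt^2 * d^2 * (2 * (Q x + Q y))" .
    have "81 * (1 - s)^2 * Lt^2 * d^2 * (2 * (Q x + Q y)) = (162 * (1 - s)^2 * Lt^2 * (Q x + Q y)) * d^2"
      by simp
    with num0 have num: "(wfn s b x - wfn s b y)^2 \<le> (162 * (1 - s)^2 * Lt^2 * (Q x + Q y)) * d^2"
      by (simp only: power2_abs)
    have dp: "d powr (1 + 2 * s) > 0" using 2 by simp
    have "?L = (wfn s b x - wfn s b y)^2 / d powr (1 + 2 * s)" by (simp add: d_def)
    also have "\<dots> \<le> (162 * (1 - s)^2 * Lt^2 * (Q x + Q y)) * d^2 / d powr (1 + 2 * s)"
      using num dp by (intro divide_right_mono) auto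
    also have "\<dots> = (162 * (1 - s)^2 * Lt^2 * (Q x + Q y)) * d powr (1 - 2 * s)"
      using powr_sq_div[of d s] 2 by (simp only: times_divide_eq_right[symmetric])
    also have "\<dots> = ?R1"
      using 2 by (simp add: Nk_def Lt_def d_def indicator_def)
    finally show ?thesis using R2 by linarith
  next
    case 3
    have wx: "\<bar>wfn s b x\<bar> \<le> 8 * (1 - s) * J x" and wy: "\<bar>wfn s b y\<bar> \<le> 8 * (1 - s) * J y"
      using wfn_bound[OF b s] by (auto simp: J_def)
    have "(wfn s b x - wfn s b y)^2 \<le> 2 * (wfn s b x)^2 + 2 * (wfn s b y)^2"
      using sq_diff_le[of "wfn s b x" "wfn s b y"] by simp
    also have "(wfn s b x)^2 \<le> (8 * (1 - s) * J x)^2"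
      using wx by (metis abs_ge_zero power2_abs power_mono)
    also have "(wfn s b y)^2 \<le> (8 * (1 - s) * J y)^2"
      using wy by (metis abs_ge_zero power2_abs power_mono)
    also have "(8 * (1 - s) * J x)^2 = 64 * (1 - s)^2 * J x"
    proof -
      have "(J x)^2 = J x" by (simp add: J_def indicator_def)
      then show ?thesis by (simp only: power_mult_distrib) simp
    qed
    also have "(8 * (1 - s) * J y)^2 = 64 * (1 - s)^2 * J y"
    proof -
      have "(J y)^2 = J y" by (simp add: J_def indicator_def)
      then show ?thesis by (simp only: power_mult_distrib) simp
    qed
    finally have num: "(wfn s b x - wfn s b y)^2 \<le> 128 * (1 - s)^2 * (J x + J y)" by (simp add: algebra_simps)
    have dp: "d powr (1 + 2 * s) > 0" using 3 by simp
    have "?L = (wfn s b x - wfn s b y)^2 / d powr (1 + 2 * s)" by (simp add: d_def)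
    also have "\<dots> \<le> 128 * (1 - s)^2 * (J x + J y) / d powr (1 + 2 * s)"
      using num dp by (intro divide_right_mono) auto
    also have "\<dots> = 128 * (1 - s)^2 * (J x + J y) * (1 / d powr (1 + 2 * s))" by simp
    also have "\<dots> = 128 * (1 - s)^2 * (J x + J y) * d powr (-1 - 2 * s)"
      using powr_inv_div[of d s] 3 by simp
    also have "\<dots> = ?R2"
      using 3 by (simp add: Fk_def d_def indicator_def)
    finally show ?thesis using R1 by linarith
  qed
qed


lemma enn_2x8: "(0::real) \<le> x \<Longrightarrow> 2 * ennreal x * 8 = ennreal (16 * x)"
proof -
  assume x: "0 \<le> x"
  have "ennreal (16 * x) = ennreal (2 * x * 8)" by simp
  also have "\<dots> = ennreal (2 * x) * ennreal 8" by (rule ennreal_mult'') simp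
  also have "ennreal (2 * x) = ennreal 2 * ennreal x" by (rule ennreal_mult') simp
  finally show ?thesis by simp
qed

lemma enn_2x: "(0::real) \<le> x \<Longrightarrow> 2 * ennreal x = ennreal (2 * x)"
  by (subst ennreal_mult') simp_all

lemma Q_int: "(\<integral>\<^sup>+x. ennreal (Q x) \<partial>lborel) \<le> ennreal 8"
proof -
  define f where "f t = ennreal (indicator {t. \<bar>t\<bar> \<le> 1} t * \<bar>t\<bar> powr (-1/2))" for t :: real
  have fm[measurable]: "f \<in> borel_measurable borel" unfolding f_def by measurable
  have fi: "(\<integral>\<^sup>+t. f t \<partial>lborel) \<le> ennreal 4"
    using near_kernel[of "-1/2" 1] unfolding f_def by simp
  have "(\<integral>\<^sup>+x. ennreal (Q x) \<partial>lborel) \<le> (\<integral>\<^sup>+x. f x + f (x - 1) \<partial>lborel)"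
  proof (intro nn_integral_mono)
    fix x :: real
    show "ennreal (Q x) \<le> f x + f (x - 1)"
    proof (cases "x \<in> {0<..<1}")
      case True
      then have "Q x = \<bar>x\<bar> powr (-1/2) + \<bar>x - 1\<bar> powr (-1/2)" by (simp add: Q_def)
      moreover have "f x = ennreal (\<bar>x\<bar> powr (-1/2))" "f (x - 1) = ennreal (\<bar>x - 1\<bar> powr (-1/2))"
        using True by (auto simp: f_def)
      ultimately show ?thesis by simp
    next
      case False then show ?thesis by (simp add: Q_def)
    qed
  qed
  also have "\<dots> = (\<integral>\<^sup>+x. f x \<partial>lborel) + (\<integral>\<^sup>+x. f (x - 1) \<partial>lborel)"
    by (rule nn_integral_add) auto
  also have "(\<integral>\<^sup>+x. f (x - 1) \<partial>lborel) = (\<integral>\<^sup>+x. f x \<partial>lborel)"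
    using nn_transl(2)[OF fm, of 1] .
  also have "(\<integral>\<^sup>+x. f x \<partial>lborel) + (\<integral>\<^sup>+x. f x \<partial>lborel) \<le> ennreal 4 + ennreal 4"
    using fi by (intro add_mono) auto
  finally show ?thesis by (simp add: ennreal_plus[symmetric] del: ennreal_plus)
qed

lemma J_int: "(\<integral>\<^sup>+x. ennreal (J x) \<partial>lborel) = 1"
  by (simp add: J_def ennreal_indicator)

lemma Hs_int:
  assumes b: "0 < b" "b < 1" and s: "7/8 \<le> s" "s < 1"
  shows "(\<integral>\<^sup>+x. (\<integral>\<^sup>+y. ennreal ((wfn s b x - wfn s b y)^2 / \<bar>x - y\<bar> powr (1 + 2 * s)) \<partial>lborel) \<partial>lborel)
    \<le> ennreal ((1 - s) * (16 * (162 * (1/b + 1/(1-b))^2) + 512))"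
proof -
  define A where "A = 162 * (1/b + 1/(1-b))^2"
  define c1 where "c1 = (1 - s)^2 * A"
  define c2 where "c2 = (1 - s)^2 * 128"
  have c1: "c1 \<ge> 0" and c2: "c2 \<ge> 0" by (simp_all add: c1_def c2_def A_def)
  define N where "N x y = Nk s (x - y) * (Q x + Q y)" for x y
  define G where "G x y = Fk s (x - y) * (J x + J y)" for x y
  have N0: "N x y \<ge> 0" for x y using Q_nonneg[of x] Q_nonneg[of y] by (simp add: N_def Nk_def)
  have G0: "G x y \<ge> 0" for x y by (simp add: G_def Fk_def J_def)
  have Nm[measurable]: "(\<lambda>(x, y). N x y) \<in> borel_measurable (lborel \<Otimes>\<^sub>M lborel)" unfolding N_def by measurable
  have Gm[measurable]: "(\<lambda>(x, y). G x y) \<in> borel_measurable (lborel \<Otimes>\<^sub>M lborel)" unfolding G_def by measurable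
  have pw: "ennreal ((wfn s b x - wfn s b y)^2 / \<bar>x - y\<bar> powr (1 + 2 * s))
      \<le> ennreal c1 * ennreal (N x y) + ennreal c2 * ennreal (G x y)" for x y
  proof -
    have "(wfn s b x - wfn s b y)^2 / \<bar>x - y\<bar> powr (1 + 2 * s) \<le> c1 * N x y + c2 * G x y"
      using F_bound[OF b s, of x y] by (simp add: c1_def c2_def A_def N_def G_def)
    then have "ennreal ((wfn s b x - wfn s b y)^2 / \<bar>x - y\<bar> powr (1 + 2 * s)) \<le> ennreal (c1 * N x y + c2 * G x y)"
      by (rule ennreal_leI)
    also have "\<dots> = ennreal c1 * ennreal (N x y) + ennreal c2 * ennreal (G x y)"
      using c1 c2 N0[of x y] G0[of x y] by (simp add: ennreal_mult)
    finally show ?thesis .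
  qed
  have kN: "(\<integral>\<^sup>+t. ennreal (Nk s t) \<partial>lborel) \<le> ennreal (1 / (1 - s))"
  proof -
    have "(\<integral>\<^sup>+t. ennreal (Nk s t) \<partial>lborel) \<le> ennreal (2 * (1 powr (1 - 2 * s + 1) / (1 - 2 * s + 1)))"
      unfolding Nk_def using s by (intro near_kernel) auto
    also have "2 * (1 powr (1 - 2 * s + 1) / (1 - 2 * s + 1)) = 1 / (1 - s)"
      using s by (simp add: field_simps)
    finally show ?thesis .
  qed
  have kF: "(\<integral>\<^sup>+t. ennreal (Fk s t) \<partial>lborel) \<le> ennreal (1 / s)"
  proof -
    have "(\<integral>\<^sup>+t. ennreal (Fk s t) \<partial>lborel) \<le> ennreal (2 * (- 1 / (-1 - 2 * s + 1)))"
      unfolding Fk_def using s by (intro far_kernel) auto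
    also have "2 * (- 1 / (-1 - 2 * s + 1)) = 1 / s"
      using s by (simp add: field_simps)
    finally show ?thesis .
  qed
  have NN: "(\<integral>\<^sup>+x. (\<integral>\<^sup>+y. ennreal (N x y) \<partial>lborel) \<partial>lborel) \<le> ennreal (16 / (1 - s))"
  proof -
    have "(\<integral>\<^sup>+x. (\<integral>\<^sup>+y. ennreal (N x y) \<partial>lborel) \<partial>lborel)
        \<le> 2 * ennreal (1 / (1 - s)) * (\<integral>\<^sup>+x. ennreal (Q x) \<partial>lborel)"
      unfolding N_def by (rule double_sym[OF _ _ _ Q_nonneg _ kN]) (auto simp: Nk_def indicator_def)
    also have "\<dots> \<le> 2 * ennreal (1 / (1 - s)) * ennreal 8"
      by (intro mult_left_mono Q_int) auto
    also have "\<dots> = ennreal (16 * (1 / (1 - s)))"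
      using enn_2x8[of "1/(1-s)"] s by simp
    also have "16 * (1 / (1 - s)) = 16 / (1 - s)" by simp
    finally show ?thesis .
  qed
  have GG: "(\<integral>\<^sup>+x. (\<integral>\<^sup>+y. ennreal (G x y) \<partial>lborel) \<partial>lborel) \<le> ennreal (2 / s)"
  proof -
    have "(\<integral>\<^sup>+x. (\<integral>\<^sup>+y. ennreal (G x y) \<partial>lborel) \<partial>lborel)
        \<le> 2 * ennreal (1 / s) * (\<integral>\<^sup>+x. ennreal (J x) \<partial>lborel)"
      unfolding G_def by (rule double_sym[OF _ _ _ _ _ kF]) (auto simp: Fk_def J_def indicator_def)
    also have "\<dots> = 2 * ennreal (1 / s)" by (simp add: J_int)
    also have "\<dots> = ennreal (2 * (1 / s))" using s by (intro enn_2x) simp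
    also have "2 * (1 / s) = 2 / s" by simp
    finally show ?thesis .
  qed
  have "(\<integral>\<^sup>+x. (\<integral>\<^sup>+y. ennreal ((wfn s b x - wfn s b y)^2 / \<bar>x - y\<bar> powr (1 + 2 * s)) \<partial>lborel) \<partial>lborel)
      \<le> (\<integral>\<^sup>+x. (\<integral>\<^sup>+y. ennreal c1 * ennreal (N x y) + ennreal c2 * ennreal (G x y) \<partial>lborel) \<partial>lborel)"
    by (intro nn_integral_mono pw)
  also have "\<dots> = (\<integral>\<^sup>+x. ennreal c1 * (\<integral>\<^sup>+y. ennreal (N x y) \<partial>lborel) + ennreal c2 * (\<integral>\<^sup>+y. ennreal (G x y) \<partial>lborel) \<partial>lborel)"
    by (intro nn_integral_cong) (simp add: nn_integral_add nn_integral_cmult)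
  also have "\<dots> = ennreal c1 * (\<integral>\<^sup>+x. (\<integral>\<^sup>+y. ennreal (N x y) \<partial>lborel) \<partial>lborel) + ennreal c2 * (\<integral>\<^sup>+x. (\<integral>\<^sup>+y. ennreal (G x y) \<partial>lborel) \<partial>lborel)"
  proof -
    have m1: "(\<lambda>x. \<integral>\<^sup>+y. ennreal (N x y) \<partial>lborel) \<in> borel_measurable lborel" by measurable
    have m2: "(\<lambda>x. \<integral>\<^sup>+y. ennreal (G x y) \<partial>lborel) \<in> borel_measurable lborel" by measurable
    show ?thesis using m1 m2 by (simp add: nn_integral_add nn_integral_cmult)
  qed
  also have "\<dots> \<le> ennreal c1 * ennreal (16 / (1 - s)) + ennreal c2 * ennreal (2 / s)"
    by (intro add_mono mult_left_mono NN GG) auto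
  also have "\<dots> = ennreal (c1 * (16 / (1 - s)) + c2 * (2 / s))"
    using c1 c2 s by (simp add: ennreal_mult[symmetric])
  also have "\<dots> \<le> ennreal ((1 - s) * (16 * A + 512))"
  proof (rule ennreal_leI)
    have e1: "c1 * (16 / (1 - s)) = (1 - s) * (16 * A)" using s by (simp add: c1_def power2_eq_square field_simps)
    have "c2 * (2 / s) = (1 - s) * (256 * ((1 - s) / s))" using s by (simp add: c2_def power2_eq_square field_simps)
    also have "\<dots> \<le> (1 - s) * 512"
    proof -
      have "(1 - s) / s \<le> 2" using s by (simp add: divide_le_eq)
      then have h: "256 * ((1 - s) / s) \<le> 512" by linarith
      show ?thesis by (rule mult_left_mono[OF h]) (use s in simp)
    qed
    finally show "c1 * (16 / (1 - s)) + c2 * (2 / s) \<le> (1 - s) * (16 * A + 512)"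
      using e1 by (simp add: algebra_simps)
  qed
  finally show ?thesis by (simp add: A_def)
qed

lemma Cs_bound: "\<exists>KC>0. \<forall>s. 7/8 \<le> s \<and> s < 1 \<longrightarrow> 0 \<le> Cs s \<and> Cs s \<le> KC * (1 - s)"
proof -
  have cont: "continuous_on {1..2::real} Gamma"
    by (rule continuous_on_Gamma) (auto simp: nonpos_Ints_def)
  obtain xM where xM: "xM \<in> {1..2}" "\<forall>y\<in>{1..2::real}. Gamma y \<le> Gamma xM"
    using continuous_attains_sup[OF compact_Icc _ cont] by auto
  obtain xm where xm: "xm \<in> {1..2}" "\<forall>y\<in>{1..2::real}. Gamma xm \<le> Gamma y"
    using continuous_attains_inf[OF compact_Icc _ cont] by auto
  define M where "M = Gamma xM"
  define m where "m = Gamma xm"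
  have m0: "m > 0" using xm by (simp add: m_def)
  have M0: "M > 0" using xM by (simp add: M_def)
  show ?thesis
  proof (intro exI[of _ "4 * M / m"] conjI allI impI)
    show "0 < 4 * M / m" using m0 M0 by simp
    fix s :: real assume s: "7/8 \<le> s \<and> s < 1"
    have G1: "Gamma (2 - s) = (1 - s) * Gamma (1 - s)"
    proof -
      have "1 - s \<notin> \<int>\<^sub>\<le>\<^sub>0" using s nonpos_Ints_nonpos by fastforce
      then show ?thesis using Gamma_plus1[of "1 - s"] by (simp add: algebra_simps)
    qed
    have Gp: "Gamma (2 - s) > 0" "Gamma (s + 1/2) > 0" "Gamma (1 - s) > 0" using s by auto
    have Cs_eq: "Cs s = 2 powr (2 * s) * s * Gamma (s + 1/2) * (1 - s) / (sqrt pi * Gamma (2 - s))"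
    proof -
      define A where "A = 2 powr (2 * s) * s * Gamma (s + 1/2)"
      have ne: "1 - s \<noteq> 0" using s by simp
      have "A * (1 - s) / (sqrt pi * ((1 - s) * Gamma (1 - s))) = ((1 - s) * A) / ((1 - s) * (sqrt pi * Gamma (1 - s)))"
        by (simp add: mult.commute mult.left_commute)
      also have "\<dots> = A / (sqrt pi * Gamma (1 - s))"
        using ne by (rule nonzero_mult_divide_mult_cancel_left)
      finally show ?thesis unfolding Cs_def G1 A_def by simp
    qed
    have p: "2 powr (2 * s) \<le> 4"
    proof -
      have "2 powr (2 * s) \<le> 2 powr (2::real)" using s by (intro powr_mono) auto
      then show ?thesis by simp
    qed
    have p0: "0 \<le> 2 powr (2 * s)" by simp
    have sp: "1 \<le> sqrt pi" using pi_gt3 by simp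
    have gM: "Gamma (s + 1/2) \<le> M" using xM s by (auto simp: M_def)
    have gm: "m \<le> Gamma (2 - s)" using xm s by (auto simp: m_def)
    have n1: "2 powr (2 * s) * s \<le> 4 * 1" by (rule mult_mono) (use p s in auto)
    have n2: "2 powr (2 * s) * s * Gamma (s + 1/2) \<le> 4 * 1 * M"
      by (rule mult_mono[OF n1 gM]) (use Gp in auto)
    have num: "2 powr (2 * s) * s * Gamma (s + 1/2) * (1 - s) \<le> 4 * 1 * M * (1 - s)"
      by (rule mult_right_mono[OF n2]) (use s in auto)
    have "1 * Gamma (2 - s) \<le> sqrt pi * Gamma (2 - s)"
      by (rule mult_right_mono[OF sp]) (use Gp in simp)
    then have den: "m \<le> sqrt pi * Gamma (2 - s)" using gm by simp
    have n0: "0 \<le> 2 powr (2 * s) * s * Gamma (s + 1/2) * (1 - s)" using s Gp by simp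
    have "Cs s \<le> 4 * 1 * M * (1 - s) / m"
      unfolding Cs_eq using num den n0 m0 by (intro frac_le) auto
    then show "Cs s \<le> 4 * M / m * (1 - s)" by simp
    show "0 \<le> Cs s" unfolding Cs_eq using n0 Gp by simp
  qed
qed


definition gd :: "real \<Rightarrow> real \<Rightarrow> real \<Rightarrow> real" where
  "gd s b x = (if 0 < x \<and> x < b then 1 / b else if b < x \<and> x < 1 then - 1 / (1 - b) else 0)
              * (s * T b x powr (s - 1) - 1)"

lemma gd_meas[measurable]: "gd s b \<in> borel_measurable borel"
  unfolding gd_def by measurable

lemma wfn_deriv:
  assumes b: "0 < b" "b < 1" and x: "0 < x" "x < 1" "x \<noteq> b"
  shows "(wfn s b has_real_derivative gd s b x) (at x)"
proof (cases "x < b")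
  case True
  have "((\<lambda>y. P s (y / b)) has_real_derivative (s * (x / b) powr (s - 1) - 1) * (1 / b)) (at x)"
    by (rule DERIV_chain2[OF P_deriv]) (use x b in \<open>auto intro!: derivative_eq_intros\<close>)
  moreover have "(s * (x / b) powr (s - 1) - 1) * (1 / b) = gd s b x"
    using True x T_simp(1)[OF b, of x] by (simp add: gd_def)
  ultimately have "((\<lambda>y. P s (y / b)) has_real_derivative gd s b x) (at x)" by simp
  then show ?thesis
    by (rule has_field_derivative_transform_within_open[where S="{0<..<b}"])
       (use True x b T_simp(1)[OF b] in \<open>auto simp: wfn_def\<close>)
next
  case False
  then have xb: "b < x" using x by simp
  have "((\<lambda>y. P s ((1 - y) / (1 - b))) has_real_derivative (s * ((1 - x) / (1 - b)) powr (s - 1) - 1) * (- 1 / (1 - b))) (at x)"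
  proof -
    have "((\<lambda>y. (1 - y) / (1 - b)) has_real_derivative ((0 - 1) / (1 - b))) (at x)"
      by (intro DERIV_cdivide DERIV_diff DERIV_const DERIV_ident)
    then have inner: "((\<lambda>y. (1 - y) / (1 - b)) has_real_derivative (- 1 / (1 - b))) (at x)" by simp
    have "(1 - x) / (1 - b) > 0" using x b by simp
    from DERIV_chain2[OF P_deriv[OF this] inner] show ?thesis .
  qed
  moreover have "(s * ((1 - x) / (1 - b)) powr (s - 1) - 1) * (- 1 / (1 - b)) = gd s b x"
    using xb x T_simp(2)[OF b, of x] by (simp add: gd_def)
  ultimately have "((\<lambda>y. P s ((1 - y) / (1 - b))) has_real_derivative gd s b x) (at x)" by simp
  then show ?thesis
    by (rule has_field_derivative_transform_within_open[where S="{b<..<1}"])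
       (use xb x b T_simp(2)[OF b] in \<open>auto simp: wfn_def\<close>)
qed

lemma T_pos:
  assumes b: "0 < b" "b < 1" and x: "0 < x" "x < 1"
  shows "0 < T b x"
  using T_lower[OF b x] x by (simp add: min_def split: if_splits)

lemma gd_sq_bound:
  assumes b: "0 < b" "b < 1" and s: "7/8 \<le> s" "s < 1"
  shows "(gd s b x)^2 \<le> 81 * (1 - s)^2 * (1/b + 1/(1-b))^2 * Q x"
proof -
  define Lt where "Lt = 1/b + 1/(1-b)"
  define c where "c = (if 0 < x \<and> x < b then 1 / b else if b < x \<and> x < 1 then - 1 / (1 - b) else 0)"
  have gc: "gd s b x = c * (s * T b x powr (s - 1) - 1)" by (simp add: gd_def c_def)
  show ?thesis
  proof (cases "0 < x \<and> x < 1 \<and> x \<noteq> b")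
    case True
    have Tp: "0 < T b x" "T b x \<le> 1" using T_pos[OF b] T_range[OF b] True by auto
    have cb: "\<bar>c\<bar> \<le> Lt" using b by (auto simp: c_def Lt_def)
    have "\<bar>gd s b x\<bar> \<le> Lt * (9 * (1 - s) * T b x powr (-1/4))"
      unfolding gc abs_mult using cb dP_bound[OF s Tp] by (intro mult_mono) auto
    then have "(gd s b x)^2 \<le> (Lt * (9 * (1 - s) * T b x powr (-1/4)))^2"
      by (metis abs_ge_zero power2_abs power_mono)
    also have "\<dots> = 81 * (1 - s)^2 * Lt^2 * (T b x powr (-1/4))^2"
      by (simp only: power_mult_distrib) simp
    also have "\<dots> \<le> 81 * (1 - s)^2 * Lt^2 * Q x"
      by (intro mult_left_mono T_weight[OF b]) auto
    finally show ?thesis by (simp add: Lt_def)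
  next
    case False
    then have "c = 0" using b by (auto simp: c_def)
    then show ?thesis using Q_nonneg[of x] by (simp add: gc)
  qed
qed

lemma wfn_cont:
  assumes b: "0 < b" "b < 1" and s: "0 < s"
  shows "continuous_on UNIV (wfn s b)"
proof -
  have cT: "continuous_on UNIV (T b)"
    unfolding T_def by (intro continuous_intros) (use b in auto)
  have "continuous_on UNIV (\<lambda>x. T b x powr s - T b x)"
    by (intro continuous_intros continuous_on_powr' cT) (use s T_range[OF b] in auto)
  then show ?thesis by (simp add: wfn_def P_def[abs_def])
qed


lemma Q_integrable:
  shows "set_integrable lborel I01 Q" "(LINT x:I01|lborel. Q x) \<le> 8"
proof -
  have Qm: "Q \<in> borel_measurable lborel" by simp
  have fin: "(\<integral>\<^sup>+x. ennreal (Q x) \<partial>lborel) < \<infinity>"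
    using Q_int by (simp add: le_less_trans)
  have iQ: "integrable lborel Q"
    by (rule integrableI_nonneg[OF Qm]) (use fin Q_nonneg in auto)
  have eq: "(\<lambda>x. indicator I01 x *\<^sub>R Q x) = Q"
    by (auto simp: fun_eq_iff Q_def I01_def indicator_def)
  show "set_integrable lborel I01 Q" unfolding set_integrable_def eq by (rule iQ)
  have "(LINT x:I01|lborel. Q x) = integral\<^sup>L lborel Q"
    unfolding set_lebesgue_integral_def eq ..
  also have "\<dots> = enn2real (\<integral>\<^sup>+x. ennreal (Q x) \<partial>lborel)"
    by (rule integral_eq_nn_integral) (use Q_nonneg in auto)
  also have "\<dots> \<le> 8"
    using Q_int fin by (simp add: enn2real_leI)
  finally show "(LINT x:I01|lborel. Q x) \<le> 8" .
qed

lemma L2_wf: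
  assumes b: "0 < b" "b < 1" and s: "7/8 \<le> s" "s < 1"
  shows "L2_I (wfn s b)" "(LINT x:I01|lborel. (wfn s b x)^2) \<le> 64 * (1 - s)^2"
proof -
  have ic: "set_integrable lborel I01 (\<lambda>x. 64 * (1 - s)^2 * 1)"
    using set_integrable_one_I01 by (rule set_integrable_mult_right)
  have bd: "(wfn s b x)^2 \<le> 64 * (1 - s)^2 * 1" for x
  proof -
    have "\<bar>wfn s b x\<bar> \<le> 8 * (1 - s)"
      using wfn_bound[OF b s, of x] s by (cases "0 < x \<and> x < 1") (auto simp: indicator_def)
    then have "\<bar>wfn s b x\<bar>^2 \<le> (8 * (1 - s))^2" by (intro power_mono) auto
    also have "(8 * (1 - s))^2 = 64 * (1 - s)^2 * 1" by (simp only: power_mult_distrib) simp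
    finally show ?thesis by simp
  qed
  have i2: "set_integrable lborel I01 (\<lambda>x. (wfn s b x)^2)"
    by (rule set_integrable_bound[OF ic]) (use bd s in \<open>auto simp: set_borel_measurable_def\<close>)
  show "L2_I (wfn s b)" unfolding L2_I_def using i2 by simp
  have "(LINT x:I01|lborel. (wfn s b x)^2) \<le> (LINT x:I01|lborel. 64 * (1 - s)^2 * 1)"
    by (rule set_integral_mono[OF i2 ic bd])
  also have "\<dots> = 64 * (1 - s)^2"
    using set_integral_const[of I01 lborel "64 * (1 - s)^2"] by (simp add: I01_def)
  finally show "(LINT x:I01|lborel. (wfn s b x)^2) \<le> 64 * (1 - s)^2" .
qed

lemma L2_gd:
  assumes b: "0 < b" "b < 1" and s: "7/8 \<le> s" "s < 1"
  shows "L2_I (gd s b)" "(LINT x:I01|lborel. (gd s b x)^2) \<le> 648 * (1 - s)^2 * (1/b + 1/(1-b))^2"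
proof -
  define K where "K = 81 * (1 - s)^2 * (1/b + 1/(1-b))^2"
  have K0: "K \<ge> 0" by (simp add: K_def)
  have ic: "set_integrable lborel I01 (\<lambda>x. K * Q x)"
    using Q_integrable(1) by (rule set_integrable_mult_right)
  have bd: "(gd s b x)^2 \<le> K * Q x" for x
    using gd_sq_bound[OF b s, of x] by (simp add: K_def)
  have i2: "set_integrable lborel I01 (\<lambda>x. (gd s b x)^2)"
    by (rule set_integrable_bound[OF ic]) (use bd Q_nonneg K0 in \<open>auto simp: set_borel_measurable_def abs_mult\<close>)
  show "L2_I (gd s b)" unfolding L2_I_def using i2 by simp
  have "(LINT x:I01|lborel. (gd s b x)^2) \<le> (LINT x:I01|lborel. K * Q x)"
    by (rule set_integral_mono[OF i2 ic bd])
  also have "\<dots> = K * (LINT x:I01|lborel. Q x)" by simp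
  also have "\<dots> \<le> K * 8" using Q_integrable(2) K0 by (intro mult_left_mono) auto
  finally show "(LINT x:I01|lborel. (gd s b x)^2) \<le> 648 * (1 - s)^2 * (1/b + 1/(1-b))^2"
    by (simp add: K_def)
qed


lemma test_support:
  assumes "test_fun \<psi>"
  shows "\<exists>a c. 0 < a \<and> a \<le> c \<and> c < 1 \<and> (\<forall>x. x \<notin> {a..c} \<longrightarrow> \<psi> x = 0)"
proof -
  obtain a c where ac: "0 < a" "c < 1" "\<forall>x. x \<notin> {a..c} \<longrightarrow> \<psi> x = 0"
    using assms unfolding test_fun_def by blast
  show ?thesis
  proof (cases "a \<le> c")
    case True then show ?thesis using ac by blast
  next
    case False
    then have "\<forall>x. \<psi> x = 0" using ac by auto
    then show ?thesis by (intro exI[of _ "1/2"]) auto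
  qed
qed

lemma deriv_zero_out:
  fixes \<psi> :: "real \<Rightarrow> real" and a c x :: real
  assumes ac: "\<forall>x. x \<notin> {a..c} \<longrightarrow> \<psi> x = 0" and x: "x \<notin> {a..c}"
  shows "deriv \<psi> x = 0"
proof -
  have "(\<psi> has_real_derivative 0) (at x)"
  proof (cases "x < a")
    case True
    show ?thesis
      by (rule has_field_derivative_transform_within_open[of "\<lambda>_. 0" 0 x "{..<a}"]) (use True ac in auto)
  next
    case False
    then have "c < x" using x by auto
    show ?thesis
      by (rule has_field_derivative_transform_within_open[of "\<lambda>_. 0" 0 x "{c<..}"]) (use \<open>c < x\<close> ac in auto)
  qed
  then show ?thesis by (rule DERIV_imp_deriv)
qed

lemma bounded_supp:
  fixes f :: "real \<Rightarrow> real"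
  assumes "continuous_on UNIV f" "\<forall>x. x \<notin> {a..c} \<longrightarrow> f x = 0" "a \<le> c"
  shows "\<exists>B. \<forall>x. \<bar>f x\<bar> \<le> B"
proof -
  have "continuous_on {a..c} (\<lambda>x. \<bar>f x\<bar>)"
    by (intro continuous_intros continuous_on_subset[OF assms(1)]) auto
  then obtain x0 where "x0 \<in> {a..c}" "\<forall>y\<in>{a..c}. \<bar>f y\<bar> \<le> \<bar>f x0\<bar>"
    using continuous_attains_sup[OF compact_Icc] assms(3) by (metis atLeastAtMost_iff order_refl empty_iff)
  then show ?thesis using assms(2) by (intro exI[of _ "\<bar>f x0\<bar>"]) (metis abs_ge_zero abs_zero)
qed

lemma weak_deriv_wfn:
  assumes b: "0 < b" "b < 1" and s: "7/8 \<le> s" "s < 1"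
  shows "weak_deriv (wfn s b) (gd s b)"
  unfolding weak_deriv_def
proof (intro allI impI)
  fix \<psi> assume test: "test_fun \<psi>"
  obtain a c where ac: "0 < a" "a \<le> c" "c < 1" and supp: "\<forall>x. x \<notin> {a..c} \<longrightarrow> \<psi> x = 0"
    using test_support[OF test] by blast
  have dsupp: "\<forall>x. x \<notin> {a..c} \<longrightarrow> deriv \<psi> x = 0"
    using deriv_zero_out[OF supp] by blast
  have pc: "continuous_on UNIV \<psi>"
    using test_fun_diff(1)[OF test] by (meson continuous_at_imp_continuous_on differentiable_imp_continuous_within)
  have dc: "continuous_on UNIV (deriv \<psi>)"
    using test_fun_diff(2)[OF test] by (meson continuous_at_imp_continuous_on differentiable_imp_continuous_within)
  obtain Bp where Bp: "\<forall>x. \<bar>\<psi> x\<bar> \<le> Bp" using bounded_supp[OF pc supp ac(2)] by blast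
  obtain Bd where Bd: "\<forall>x. \<bar>deriv \<psi> x\<bar> \<le> Bd" using bounded_supp[OF dc dsupp ac(2)] by blast
  have pm[measurable]: "\<psi> \<in> borel_measurable lborel" and dm[measurable]: "deriv \<psi> \<in> borel_measurable lborel"
    using test_fun_meas[OF test] by auto
  define F1 where "F1 x = gd s b x * \<psi> x" for x
  define F2 where "F2 x = wfn s b x * deriv \<psi> x" for x
  have wb: "\<bar>wfn s b x\<bar> \<le> 8" for x
    using wfn_bound[OF b s, of x] s by (cases "0 < x \<and> x < 1") (auto simp: indicator_def)
  have i2: "set_integrable lborel I01 F2"
  proof -
    have ic: "set_integrable lborel I01 (\<lambda>x. 8 * Bd * 1)"
      using set_integrable_one_I01 by (rule set_integrable_mult_right)
    show ?thesis
    proof (rule set_integrable_bound[OF ic])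
      show "set_borel_measurable lborel I01 F2" unfolding set_borel_measurable_def F2_def by measurable
      show "AE x in lborel. x \<in> I01 \<longrightarrow> norm (F2 x) \<le> norm (8 * Bd * 1)"
      proof (intro AE_I2 impI)
        fix x
        have "\<bar>F2 x\<bar> \<le> 8 * Bd" unfolding F2_def abs_mult
          using wb[of x] Bd by (intro mult_mono) auto
        then show "norm (F2 x) \<le> norm (8 * Bd * 1)" by auto
      qed
    qed
  qed
  have i1: "set_integrable lborel I01 F1"
  proof -
    have ic: "set_integrable lborel I01 (\<lambda>x. Bp * gd s b x)"
      using L2_set_integrable[OF L2_gd(1)[OF b s]] by (rule set_integrable_mult_right)
    show ?thesis
    proof (rule set_integrable_bound[OF ic])
      show "set_borel_measurable lborel I01 F1" unfolding set_borel_measurable_def F1_def by measurable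
      show "AE x in lborel. x \<in> I01 \<longrightarrow> norm (F1 x) \<le> norm (Bp * gd s b x)"
      proof (intro AE_I2 impI)
        fix x
        have "\<bar>F1 x\<bar> \<le> \<bar>gd s b x\<bar> * Bp" unfolding F1_def abs_mult
          using Bp by (intro mult_left_mono) auto
        then show "norm (F1 x) \<le> norm (Bp * gd s b x)" using Bp by (auto simp: abs_mult mult.commute)
      qed
    qed
  qed
  define a' where "a' = a / 2"
  define c' where "c' = (c + 1) / 2"
  have a'c': "0 < a'" "a' < a" "c < c'" "c' < 1" "a' \<le> c'" using ac by (auto simp: a'_def c'_def)
  have vanish: "x \<notin> {a..c} \<Longrightarrow> F1 x = 0 \<and> F2 x = 0" for x
    using supp dsupp by (simp add: F1_def F2_def)
  have conv: "F integrable_on {a'..c'} \<and> (LINT x:I01|lborel. F x) = integral {a'..c'} F"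
    if Fi: "set_integrable lborel I01 F" and Fv: "\<And>x. x \<notin> {a..c} \<Longrightarrow> F x = 0" for F :: "real \<Rightarrow> real"
  proof -
    have eqf: "(\<lambda>x. indicator I01 x *\<^sub>R F x) = (\<lambda>x. indicator {a'..c'} x *\<^sub>R F x)"
    proof
      fix x
      show "indicator I01 x *\<^sub>R F x = indicator {a'..c'} x *\<^sub>R F x"
      proof (cases "x \<in> {a..c}")
        case True then show ?thesis using a'c' ac by (auto simp: I01_def indicator_def)
      next
        case False then show ?thesis using Fv by simp
      qed
    qed
    have si: "set_integrable lborel {a'..c'} F" using Fi unfolding set_integrable_def eqf .
    have "(LINT x:I01|lborel. F x) = (LINT x:{a'..c'}|lborel. F x)"
      unfolding set_lebesgue_integral_def eqf ..
    then show ?thesis using set_borel_integral_eq_integral[OF si] by simp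
  qed
  have c1: "F1 integrable_on {a'..c'}" "(LINT x:I01|lborel. F1 x) = integral {a'..c'} F1"
    using conv[OF i1] vanish by auto
  have c2: "F2 integrable_on {a'..c'}" "(LINT x:I01|lborel. F2 x) = integral {a'..c'} F2"
    using conv[OF i2] vanish by auto
  have ftc: "((\<lambda>x. F1 x + F2 x) has_integral (wfn s b c' * \<psi> c' - wfn s b a' * \<psi> a')) {a'..c'}"
  proof (rule fundamental_theorem_of_calculus_interior_strong[of "{b}"])
    show "finite {b}" by simp
    show "a' \<le> c'" using a'c' by simp
    show "((\<lambda>x. wfn s b x * \<psi> x) has_vector_derivative F1 x + F2 x) (at x)" if "x \<in> {a'<..<c'} - {b}" for x
    proof -
      have x: "0 < x" "x < 1" "x \<noteq> b" using that a'c' by auto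
      have "((\<lambda>x. wfn s b x * \<psi> x) has_real_derivative gd s b x * \<psi> x + deriv \<psi> x * wfn s b x) (at x)"
        by (rule DERIV_mult[OF wfn_deriv[OF b x] real_diff_DERIV[OF test_fun_diff(1)[OF test]]])
      then show ?thesis unfolding has_real_derivative_iff_has_vector_derivative F1_def F2_def
        by (simp add: mult.commute)
    qed
    show "continuous_on {a'..c'} (\<lambda>x. wfn s b x * \<psi> x)"
    proof -
      have "continuous_on {a'..c'} (wfn s b)"
        using continuous_on_subset[OF wfn_cont[OF b, of s]] s by auto
      moreover have "continuous_on {a'..c'} \<psi>" using continuous_on_subset[OF pc] by auto
      ultimately show ?thesis by (rule continuous_on_mult)
    qed
  qed
  have "\<psi> a' = 0" "\<psi> c' = 0" using supp a'c' by auto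
  then have "integral {a'..c'} (\<lambda>x. F1 x + F2 x) = 0" using integral_unique[OF ftc] by simp
  moreover have "integral {a'..c'} (\<lambda>x. F1 x + F2 x) = integral {a'..c'} F1 + integral {a'..c'} F2"
    by (rule integral_add[OF c1(1) c2(1)])
  ultimately have "(LINT x:I01|lborel. F2 x) = - (LINT x:I01|lborel. F1 x)"
    using c1(2) c2(2) by simp
  then show "set_integrable lborel I01 (\<lambda>x. wfn s b x * deriv \<psi> x) \<and>
        set_integrable lborel I01 (\<lambda>x. gd s b x * \<psi> x) \<and>
        (LINT x:I01|lborel. wfn s b x * deriv \<psi> x) = - (LINT x:I01|lborel. gd s b x * \<psi> x)"
    using i1 i2 unfolding F1_def F2_def by simp
qed


theorem proposition4p2:
  fixes b :: real
  assumes "0 < b" and "b < 1"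
  shows "\<exists>s0 C. 1/2 < s0 \<and> s0 < 1 \<and> C > 0 \<and>
    (\<forall>s. s0 < s \<and> s < 1 \<longrightarrow>
       Hs_tilde_norm_sq s (\<lambda>x. phi_s s b x - phi b x) \<le> ennreal ((C * (1 - s))^2) \<and>
       in_H1 (\<lambda>x. phi_s s b x - phi b x) \<and>
       H1_norm (\<lambda>x. phi_s s b x - phi b x) \<le> C * (1 - s))"
proof -
  have b: "0 < b" "b < 1" using assms by auto
  obtain KC where KC: "KC > 0" "\<And>s. 7/8 \<le> s \<Longrightarrow> s < 1 \<Longrightarrow> 0 \<le> Cs s \<and> Cs s \<le> KC * (1 - s)"
    using Cs_bound by blast
  define Lt where "Lt = 1/b + 1/(1-b)"
  define A where "A = 162 * Lt^2"
  define X where "X = KC * (16 * A + 512) / 2"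
  define Y where "Y = 64 + 648 * Lt^2"
  define C where "C = X + Y"
  have X0: "X \<ge> 0" using KC by (simp add: X_def A_def)
  have Y1: "Y \<ge> 1" by (simp add: Y_def)
  have C1: "C \<ge> 1" using X0 Y1 by (simp add: C_def)
  have XC: "X \<le> C^2"
  proof -
    have "C \<le> C * C" using C1 by (simp add: mult_le_cancel_left1)
    then show ?thesis using Y1 by (simp add: C_def power2_eq_square)
  qed
  have YC: "sqrt Y \<le> C"
  proof -
    have "Y * 1 \<le> Y * Y" using Y1 by (intro mult_left_mono) auto
    then have "sqrt Y \<le> sqrt (Y * Y)" by (intro real_sqrt_le_mono) simp
    also have "sqrt (Y * Y) = Y" using Y1 by simp
    finally have "sqrt Y \<le> Y" .
    then show ?thesis using X0 by (simp add: C_def)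
  qed
  have main: "Hs_tilde_norm_sq s (\<lambda>x. phi_s s b x - phi b x) \<le> ennreal ((C * (1 - s))^2) \<and>
       in_H1 (\<lambda>x. phi_s s b x - phi b x) \<and>
       H1_norm (\<lambda>x. phi_s s b x - phi b x) \<le> C * (1 - s)" if ss: "7/8 < s \<and> s < 1" for s
  proof (intro conjI)
    from ss have s: "7/8 \<le> s" "s < 1" by auto
    have weq: "(\<lambda>x. phi_s s b x - phi b x) = wfn s b"
      using w_eq[OF b] by (auto simp: fun_eq_iff wfn_def)
    have Cs: "0 \<le> Cs s" "Cs s \<le> KC * (1 - s)" using KC(2)[OF s] by auto
    show "Hs_tilde_norm_sq s (\<lambda>x. phi_s s b x - phi b x) \<le> ennreal ((C * (1 - s))^2)"
    proof -
      have "Hs_tilde_norm_sq s (\<lambda>x. phi_s s b x - phi b x)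
          = ennreal (Cs s / 2) * (\<integral>\<^sup>+x. (\<integral>\<^sup>+y. ennreal ((wfn s b x - wfn s b y)^2 / \<bar>x - y\<bar> powr (1 + 2 * s)) \<partial>lborel) \<partial>lborel)"
        unfolding Hs_tilde_norm_sq_def weq ..
      also have "\<dots> \<le> ennreal (Cs s / 2) * ennreal ((1 - s) * (16 * A + 512))"
        using Hs_int[OF b s] by (intro mult_left_mono) (auto simp: A_def Lt_def)
      also have "\<dots> = ennreal (Cs s / 2 * ((1 - s) * (16 * A + 512)))"
        by (rule ennreal_mult[symmetric]) (use Cs s in \<open>auto simp: A_def\<close>)
      also have "\<dots> \<le> ennreal ((C * (1 - s))^2)"
      proof (rule ennreal_leI)
        have A0: "0 \<le> 16 * A + 512" by (simp add: A_def)
        have "Cs s / 2 * ((1 - s) * (16 * A + 512)) \<le> KC * (1 - s) / 2 * ((1 - s) * (16 * A + 512))"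
          using Cs s A0 by (intro mult_right_mono divide_right_mono) auto
        also have "\<dots> = X * (1 - s)^2" by (simp add: X_def power2_eq_square)
        also have "\<dots> \<le> C^2 * (1 - s)^2" using XC by (intro mult_right_mono) auto
        also have "\<dots> = (C * (1 - s))^2" by (simp add: power_mult_distrib)
        finally show "Cs s / 2 * ((1 - s) * (16 * A + 512)) \<le> (C * (1 - s))^2" .
      qed
      finally show ?thesis .
    qed
    show "in_H1 (\<lambda>x. phi_s s b x - phi b x)"
      unfolding weq in_H1_def using L2_wf(1)[OF b s] L2_gd(1)[OF b s] weak_deriv_wfn[OF b s] by blast
    show "H1_norm (\<lambda>x. phi_s s b x - phi b x) \<le> C * (1 - s)"
    proof -
      define g0 where "g0 = (SOME g. L2_I g \<and> weak_deriv (wfn s b) g)"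
      have g0: "L2_I g0 \<and> weak_deriv (wfn s b) g0"
        unfolding g0_def by (rule someI[of _ "gd s b"]) (use L2_gd(1)[OF b s] weak_deriv_wfn[OF b s] in auto)
      have ae: "AE x in lborel. x \<in> I01 \<longrightarrow> g0 x = gd s b x"
        using weak_deriv_unique[of g0 "wfn s b" "gd s b"] g0 L2_gd(1)[OF b s] weak_deriv_wfn[OF b s] by blast
      have g0m[measurable]: "g0 \<in> borel_measurable lborel" using g0 by (simp add: L2_I_def)
      have "(LINT x:I01|lborel. (g0 x)^2) = (LINT x:I01|lborel. (gd s b x)^2)"
        by (rule set_lebesgue_integral_cong_AE) (use ae in \<open>auto elim!: AE_mp simp: I01_def\<close>)
      then have "H1_norm (\<lambda>x. phi_s s b x - phi b x)
          = sqrt ((LINT x:I01|lborel. (wfn s b x)^2) + (LINT x:I01|lborel. (gd s b x)^2))"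
        unfolding H1_norm_def weq g0_def[symmetric] by simp
      also have "\<dots> \<le> sqrt (64 * (1 - s)^2 + 648 * (1 - s)^2 * Lt^2)"
        using L2_wf(2)[OF b s] L2_gd(2)[OF b s] by (intro real_sqrt_le_mono add_mono) (auto simp: Lt_def)
      also have "64 * (1 - s)^2 + 648 * (1 - s)^2 * Lt^2 = (1 - s)^2 * Y" by (simp add: Y_def algebra_simps)
      also have "sqrt ((1 - s)^2 * Y) = (1 - s) * sqrt Y" using s by (simp add: real_sqrt_mult)
      also have "\<dots> \<le> (1 - s) * C" using YC s by (intro mult_left_mono) auto
      finally show ?thesis by (simp add: mult.commute)
    qed
  qed
  show ?thesis
    apply (rule exI[of _ "7/8"])
    apply (rule exI[of _ C])
    using main C1 by auto
qed

end
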